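(* Let $R_1,R_2\in\mathrm{DGRings}^{0,-1}$ and let $\alpha$ be an admissible correspondence $R_1\xleftarrow{f}R_{12}\xrightarrow{g}R_2$. (i) Let $\mathrm{adm}^{-1}(\alpha)$ be the set of isomorphism classes of pairs consisting of $\varphi\in\mathrm{Hom}(R_1,R_2)$ and an isomorphism $\mathrm{adm}(\varphi)\xrightarrow{\sim}\alpha$. Then $\mathrm{adm}^{-1}(\alpha)$ canonically identifies with the set of splittings $\{s:R_1\to R_{12}\mid f\circ s=\mathrm{id}_{R_1}\}$ (morphisms in $\mathrm{DGRings}^{0,-1}$). Under this identification the map $\mathrm{adm}^{-1}(\alpha)\to\mathrm{Hom}(R_1,R_2)$ is $s\mapsto g\circ s$. (ii) The map $s\mapsto s^0$ from the set of such splittings $s$ to the set of ring homomorphisms $\sigma:R_1^0\to R_{12}^0$ with $f^0\circ\sigma=\mathrm{id}_{R_1^0}$ is bijective.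
   Context: Rings are commutative and unital. $\mathrm{DGRings}^{0,-1}$ is the category of commutative DG rings $R$ with $R^i=0$ for $i\ne 0,-1$. Equivalently, such $R$ is a ring $R^0$, an $R^0$-module $R^{-1}$ and an $R^0$-linear $d:R^{-1}\to R^0$ with $d(x)y=d(y)x$. Quasi-isomorphisms are morphisms inducing isomorphisms on $\ker d$ and $\operatorname{coker} d$. A correspondence is a diagram $R_1\xleftarrow{f}R_{12}\xrightarrow{g}R_2$ in $\mathrm{DGRings}^{0,-1}$. Morphisms of correspondences are maps $h$ of middle terms with $f'h=f$, $g'h=g$. A correspondence is admissible if $f$ is a quasi-isomorphism and $R_{12}^{-1}\to R_1^{-1}\times R_2^{-1}$ is an isomorphism. It is an anamorphism if $f$ is a surjective quasi-isomorphism. $\mathrm{Corr}_{\mathrm{adm}}(R_1,R_2)\subset\mathrm{Corr}_{\mathrm{ana}}(R_1,R_2)$ denote the full subcategories. $\mathrm{Adm}$ is the left adjoint to the inclusion (admissibilization). The map $\mathrm{adm}:\mathrm{Hom}(R_1,R_2)\to\mathrm{Corr}_{\mathrm{adm}}(R_1,R_2)$ sends $\varphi$ to $\mathrm{Adm}$ of the correspondence $R_1\xleftarrow{\mathrm{id}}R_1\xrightarrow{\varphi}R_2$. *)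

theory Defs
  imports "HOL-Algebra.Algebra" "HOL-Library.FuncSet"
begin

text \<open>An object of DGRings^{0,-1}: a ring R^0, an R^0-module R^{-1} and a map d.\<close>
record ('a, 'b) dgr =
  deg0 :: "'a ring"
  deg1 :: "('a, 'b) module"
  dd   :: "'b \<Rightarrow> 'a"

definition dgring :: "('a, 'b) dgr \<Rightarrow> bool" where
  "dgring R \<longleftrightarrow>
     cring (deg0 R) \<and> module (deg0 R) (deg1 R) \<and>
     dd R \<in> carrier (deg1 R) \<rightarrow> carrier (deg0 R) \<and>
     (\<forall>x\<in>carrier (deg1 R). \<forall>y\<in>carrier (deg1 R).
        dd R (x \<oplus>\<^bsub>deg1 R\<^esub> y) = dd R x \<oplus>\<^bsub>deg0 R\<^esub> dd R y) \<and>
     (\<forall>r\<in>carrier (deg0 R). \<forall>x\<in>carrier (deg1 R).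
        dd R (r \<odot>\<^bsub>deg1 R\<^esub> x) = r \<otimes>\<^bsub>deg0 R\<^esub> dd R x) \<and>
     (\<forall>x\<in>carrier (deg1 R). \<forall>y\<in>carrier (deg1 R).
        dd R x \<odot>\<^bsub>deg1 R\<^esub> y = dd R y \<odot>\<^bsub>deg1 R\<^esub> x)"

type_synonym ('a, 'b, 'c, 'd) dgmap = "('a \<Rightarrow> 'c) \<times> ('b \<Rightarrow> 'd)"

definition dg_hom :: "('a, 'b) dgr \<Rightarrow> ('c, 'd) dgr \<Rightarrow> ('a, 'b, 'c, 'd) dgmap \<Rightarrow> bool" where
  "dg_hom R S h \<longleftrightarrow>
     fst h \<in> ring_hom (deg0 R) (deg0 S) \<and>
     fst h \<in> extensional (carrier (deg0 R)) \<and>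
     snd h \<in> carrier (deg1 R) \<rightarrow> carrier (deg1 S) \<and>
     snd h \<in> extensional (carrier (deg1 R)) \<and>
     (\<forall>x\<in>carrier (deg1 R). \<forall>y\<in>carrier (deg1 R).
        snd h (x \<oplus>\<^bsub>deg1 R\<^esub> y) = snd h x \<oplus>\<^bsub>deg1 S\<^esub> snd h y) \<and>
     (\<forall>r\<in>carrier (deg0 R). \<forall>x\<in>carrier (deg1 R).
        snd h (r \<odot>\<^bsub>deg1 R\<^esub> x) = fst h r \<odot>\<^bsub>deg1 S\<^esub> snd h x) \<and>
     (\<forall>x\<in>carrier (deg1 R). dd S (snd h x) = fst h (dd R x))"

definition dg_id :: "('a, 'b) dgr \<Rightarrow> ('a, 'b, 'a, 'b) dgmap" where
  "dg_id R = ((\<lambda>x\<in>carrier (deg0 R). x), (\<lambda>x\<in>carrier (deg1 R). x))"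

definition dg_comp :: "('a, 'b) dgr \<Rightarrow> ('c, 'd, 'e, 'f) dgmap \<Rightarrow> ('a, 'b, 'c, 'd) dgmap
    \<Rightarrow> ('a, 'b, 'e, 'f) dgmap" where
  "dg_comp R g h = (compose (carrier (deg0 R)) (fst g) (fst h),
                    compose (carrier (deg1 R)) (snd g) (snd h))"

definition dker :: "('a, 'b) dgr \<Rightarrow> 'b set" where
  "dker R = {x \<in> carrier (deg1 R). dd R x = \<zero>\<^bsub>deg0 R\<^esub>}"

definition dim :: "('a, 'b) dgr \<Rightarrow> 'a set" where
  "dim R = dd R ` carrier (deg1 R)"

definition dcoker :: "('a, 'b) dgr \<Rightarrow> 'a set set" where
  "dcoker R = a_rcosets\<^bsub>deg0 R\<^esub> (dim R)"

definition coker_map :: "('a, 'b) dgr \<Rightarrow> ('c, 'd) dgr \<Rightarrow> ('a, 'b, 'c, 'd) dgmap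
    \<Rightarrow> 'a set \<Rightarrow> 'c set" where
  "coker_map R S h C = dim S +>\<^bsub>deg0 S\<^esub> fst h (SOME a. a \<in> C)"

definition quasi_iso :: "('a, 'b) dgr \<Rightarrow> ('c, 'd) dgr \<Rightarrow> ('a, 'b, 'c, 'd) dgmap \<Rightarrow> bool" where
  "quasi_iso R S h \<longleftrightarrow> dg_hom R S h \<and>
     bij_betw (snd h) (dker R) (dker S) \<and>
     bij_betw (coker_map R S h) (dcoker R) (dcoker S)"

definition dg_surj :: "('a, 'b) dgr \<Rightarrow> ('c, 'd) dgr \<Rightarrow> ('a, 'b, 'c, 'd) dgmap \<Rightarrow> bool" where
  "dg_surj R S h \<longleftrightarrow> fst h ` carrier (deg0 R) = carrier (deg0 S) \<and>
                       snd h ` carrier (deg1 R) = carrier (deg1 S)"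

text \<open>A correspondence R1 <-f- R12 -g-> R2 (R1, R2 given separately).\<close>
record ('m0, 'm1, 'a0, 'a1, 'b0, 'b1) corr =
  mid :: "('m0, 'm1) dgr"
  lft :: "('m0, 'm1, 'a0, 'a1) dgmap"
  rgt :: "('m0, 'm1, 'b0, 'b1) dgmap"

definition is_corr :: "('a0, 'a1) dgr \<Rightarrow> ('b0, 'b1) dgr
    \<Rightarrow> ('m0, 'm1, 'a0, 'a1, 'b0, 'b1) corr \<Rightarrow> bool" where
  "is_corr R1 R2 \<alpha> \<longleftrightarrow> dgring (mid \<alpha>) \<and> dg_hom (mid \<alpha>) R1 (lft \<alpha>) \<and> dg_hom (mid \<alpha>) R2 (rgt \<alpha>)"

definition corr_mor :: "('a0, 'a1) dgr \<Rightarrow> ('b0, 'b1) dgr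
    \<Rightarrow> ('m0, 'm1, 'a0, 'a1, 'b0, 'b1) corr \<Rightarrow> ('n0, 'n1, 'a0, 'a1, 'b0, 'b1) corr
    \<Rightarrow> ('m0, 'm1, 'n0, 'n1) dgmap \<Rightarrow> bool" where
  "corr_mor R1 R2 \<alpha> \<beta> h \<longleftrightarrow> is_corr R1 R2 \<alpha> \<and> is_corr R1 R2 \<beta> \<and>
     dg_hom (mid \<alpha>) (mid \<beta>) h \<and>
     dg_comp (mid \<alpha>) (lft \<beta>) h = lft \<alpha> \<and> dg_comp (mid \<alpha>) (rgt \<beta>) h = rgt \<alpha>"

definition corr_iso :: "('a0, 'a1) dgr \<Rightarrow> ('b0, 'b1) dgr
    \<Rightarrow> ('m0, 'm1, 'a0, 'a1, 'b0, 'b1) corr \<Rightarrow> ('n0, 'n1, 'a0, 'a1, 'b0, 'b1) corr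
    \<Rightarrow> ('m0, 'm1, 'n0, 'n1) dgmap \<Rightarrow> bool" where
  "corr_iso R1 R2 \<alpha> \<beta> h \<longleftrightarrow> corr_mor R1 R2 \<alpha> \<beta> h \<and>
     (\<exists>k. corr_mor R1 R2 \<beta> \<alpha> k \<and> dg_comp (mid \<alpha>) k h = dg_id (mid \<alpha>) \<and>
          dg_comp (mid \<beta>) h k = dg_id (mid \<beta>))"

definition is_ana_corr :: "('a0, 'a1) dgr \<Rightarrow> ('b0, 'b1) dgr
    \<Rightarrow> ('m0, 'm1, 'a0, 'a1, 'b0, 'b1) corr \<Rightarrow> bool" where
  "is_ana_corr R1 R2 \<alpha> \<longleftrightarrow> is_corr R1 R2 \<alpha> \<and>
     quasi_iso (mid \<alpha>) R1 (lft \<alpha>) \<and> dg_surj (mid \<alpha>) R1 (lft \<alpha>)"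

definition is_adm_corr :: "('a0, 'a1) dgr \<Rightarrow> ('b0, 'b1) dgr
    \<Rightarrow> ('m0, 'm1, 'a0, 'a1, 'b0, 'b1) corr \<Rightarrow> bool" where
  "is_adm_corr R1 R2 \<alpha> \<longleftrightarrow> is_corr R1 R2 \<alpha> \<and>
     quasi_iso (mid \<alpha>) R1 (lft \<alpha>) \<and>
     bij_betw (\<lambda>x. (snd (lft \<alpha>) x, snd (rgt \<alpha>) x))
       (carrier (deg1 (mid \<alpha>))) (carrier (deg1 R1) \<times> carrier (deg1 R2))"

definition graph_corr :: "('a0, 'a1) dgr \<Rightarrow> ('a0, 'a1, 'b0, 'b1) dgmap
    \<Rightarrow> ('a0, 'a1, 'a0, 'a1, 'b0, 'b1) corr" where
  "graph_corr R1 \<phi> = \<lparr>mid = R1, lft = dg_id R1, rgt = \<phi>\<rparr>"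

text \<open>Universal property of the unit eta : beta -> A of the admissibilization,
  tested against an admissible correspondence gamma: Hom(A, gamma) -> Hom(beta, gamma),
  iota |-> iota o eta, is bijective.\<close>
definition adm_universal_at :: "('a0, 'a1) dgr \<Rightarrow> ('b0, 'b1) dgr
    \<Rightarrow> ('m0, 'm1, 'a0, 'a1, 'b0, 'b1) corr \<Rightarrow> ('n0, 'n1, 'a0, 'a1, 'b0, 'b1) corr
    \<Rightarrow> ('m0, 'm1, 'n0, 'n1) dgmap \<Rightarrow> ('k0, 'k1, 'a0, 'a1, 'b0, 'b1) corr \<Rightarrow> bool" where
  "adm_universal_at R1 R2 \<beta> A \<eta> \<gamma> \<longleftrightarrow>
     (is_adm_corr R1 R2 \<gamma> \<longrightarrow>
        bij_betw (\<lambda>\<iota>. dg_comp (mid \<beta>) \<iota> \<eta>)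
          {\<iota>. corr_mor R1 R2 A \<gamma> \<iota>} {h. corr_mor R1 R2 \<beta> \<gamma> h})"

definition is_admissibilization :: "('a0, 'a1) dgr \<Rightarrow> ('b0, 'b1) dgr
    \<Rightarrow> ('m0, 'm1, 'a0, 'a1, 'b0, 'b1) corr \<Rightarrow> ('n0, 'n1, 'a0, 'a1, 'b0, 'b1) corr
    \<Rightarrow> ('m0, 'm1, 'n0, 'n1) dgmap \<Rightarrow> ('k0, 'k1, 'a0, 'a1, 'b0, 'b1) corr itself \<Rightarrow> bool" where
  "is_admissibilization R1 R2 \<beta> A \<eta> T \<longleftrightarrow>
     is_adm_corr R1 R2 A \<and> corr_mor R1 R2 \<beta> A \<eta> \<and>
     (\<forall>\<gamma> :: ('k0, 'k1, 'a0, 'a1, 'b0, 'b1) corr. adm_universal_at R1 R2 \<beta> A \<eta> \<gamma>) \<and>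
     (\<forall>\<gamma> :: ('n0, 'n1, 'a0, 'a1, 'b0, 'b1) corr. adm_universal_at R1 R2 \<beta> A \<eta> \<gamma>)"

end

theory Submission
  imports Defs
begin

lemma addhom:
  assumes G: "abelian_group G" and H: "abelian_group H"
    and cl: "f \<in> carrier G \<rightarrow> carrier H"
    and add: "\<And>x y. x \<in> carrier G \<Longrightarrow> y \<in> carrier G \<Longrightarrow> f (x \<oplus>\<^bsub>G\<^esub> y) = f x \<oplus>\<^bsub>H\<^esub> f y"
  shows "f \<zero>\<^bsub>G\<^esub> = \<zero>\<^bsub>H\<^esub>" and "x \<in> carrier G \<Longrightarrow> f (\<ominus>\<^bsub>G\<^esub> x) = \<ominus>\<^bsub>H\<^esub> f x"
    and "x \<in> carrier G \<Longrightarrow> y \<in> carrier G \<Longrightarrow> f (x \<ominus>\<^bsub>G\<^esub> y) = f x \<ominus>\<^bsub>H\<^esub> f y"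
proof -
  interpret G: abelian_group G by (rule G)
  interpret H: abelian_group H by (rule H)
  interpret gh: group_hom "add_monoid G" "add_monoid H" f
    apply (rule group_hom.intro)
      apply (rule G.a_group)
     apply (rule H.a_group)
    apply (rule group_hom_axioms.intro)
    using cl add by (auto simp: hom_def)
  show "f \<zero>\<^bsub>G\<^esub> = \<zero>\<^bsub>H\<^esub>" using gh.hom_one by simp
  show i: "x \<in> carrier G \<Longrightarrow> f (\<ominus>\<^bsub>G\<^esub> x) = \<ominus>\<^bsub>H\<^esub> f x" for x
    using gh.hom_inv[of x] by (simp add: a_inv_def)
  show "x \<in> carrier G \<Longrightarrow> y \<in> carrier G \<Longrightarrow> f (x \<ominus>\<^bsub>G\<^esub> y) = f x \<ominus>\<^bsub>H\<^esub> f y" for x y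
    using i[of y] add[of x "\<ominus>\<^bsub>G\<^esub> y"] by (simp add: a_minus_def)
qed

lemma dgringD:
  assumes "dgring R"
  shows "cring (deg0 R)" "module (deg0 R) (deg1 R)" "abelian_group (deg1 R)"
    "abelian_group (deg0 R)" "ring (deg0 R)"
    "x \<in> carrier (deg1 R) \<Longrightarrow> dd R x \<in> carrier (deg0 R)"
    "x \<in> carrier (deg1 R) \<Longrightarrow> y \<in> carrier (deg1 R) \<Longrightarrow>
       dd R (x \<oplus>\<^bsub>deg1 R\<^esub> y) = dd R x \<oplus>\<^bsub>deg0 R\<^esub> dd R y"
    "dd R \<zero>\<^bsub>deg1 R\<^esub> = \<zero>\<^bsub>deg0 R\<^esub>"
    "x \<in> carrier (deg1 R) \<Longrightarrow> dd R (\<ominus>\<^bsub>deg1 R\<^esub> x) = \<ominus>\<^bsub>deg0 R\<^esub> dd R x"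
    "x \<in> carrier (deg1 R) \<Longrightarrow> y \<in> carrier (deg1 R) \<Longrightarrow>
       dd R (x \<ominus>\<^bsub>deg1 R\<^esub> y) = dd R x \<ominus>\<^bsub>deg0 R\<^esub> dd R y"
    "r \<in> carrier (deg0 R) \<Longrightarrow> x \<in> carrier (deg1 R) \<Longrightarrow>
        dd R (r \<odot>\<^bsub>deg1 R\<^esub> x) = r \<otimes>\<^bsub>deg0 R\<^esub> dd R x"
proof -
  have c: "cring (deg0 R)" and m: "module (deg0 R) (deg1 R)"
   and cl: "dd R \<in> carrier (deg1 R) \<rightarrow> carrier (deg0 R)"
   and ad: "\<And>x y. x \<in> carrier (deg1 R) \<Longrightarrow> y \<in> carrier (deg1 R) \<Longrightarrow>
       dd R (x \<oplus>\<^bsub>deg1 R\<^esub> y) = dd R x \<oplus>\<^bsub>deg0 R\<^esub> dd R y"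
   and sm: "\<And>r x. r \<in> carrier (deg0 R) \<Longrightarrow> x \<in> carrier (deg1 R) \<Longrightarrow>
        dd R (r \<odot>\<^bsub>deg1 R\<^esub> x) = r \<otimes>\<^bsub>deg0 R\<^esub> dd R x"
    using assms unfolding dgring_def by auto
  have ag1: "abelian_group (deg1 R)" using m module.axioms(2) by blast
  have ag0: "abelian_group (deg0 R)" using c cring.axioms(1) ring.is_abelian_group by blast
  show "cring (deg0 R)" "module (deg0 R) (deg1 R)" "abelian_group (deg1 R)"
    "abelian_group (deg0 R)" "ring (deg0 R)" using c m ag1 ag0 cring.axioms(1) by auto
  show "x \<in> carrier (deg1 R) \<Longrightarrow> dd R x \<in> carrier (deg0 R)" using cl by auto
  show "x \<in> carrier (deg1 R) \<Longrightarrow> y \<in> carrier (deg1 R) \<Longrightarrow>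
       dd R (x \<oplus>\<^bsub>deg1 R\<^esub> y) = dd R x \<oplus>\<^bsub>deg0 R\<^esub> dd R y" by (rule ad)
  show "dd R \<zero>\<^bsub>deg1 R\<^esub> = \<zero>\<^bsub>deg0 R\<^esub>" by (rule addhom(1)[OF ag1 ag0 cl ad])
  show "x \<in> carrier (deg1 R) \<Longrightarrow> dd R (\<ominus>\<^bsub>deg1 R\<^esub> x) = \<ominus>\<^bsub>deg0 R\<^esub> dd R x"
    by (rule addhom(2)[OF ag1 ag0 cl ad])
  show "x \<in> carrier (deg1 R) \<Longrightarrow> y \<in> carrier (deg1 R) \<Longrightarrow>
       dd R (x \<ominus>\<^bsub>deg1 R\<^esub> y) = dd R x \<ominus>\<^bsub>deg0 R\<^esub> dd R y"
    by (rule addhom(3)[OF ag1 ag0 cl ad])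
  show "r \<in> carrier (deg0 R) \<Longrightarrow> x \<in> carrier (deg1 R) \<Longrightarrow>
        dd R (r \<odot>\<^bsub>deg1 R\<^esub> x) = r \<otimes>\<^bsub>deg0 R\<^esub> dd R x" by (rule sm)
qed

lemma dghomD:
  assumes R: "dgring R" and S: "dgring S" and h: "dg_hom R S h"
  shows "fst h \<in> ring_hom (deg0 R) (deg0 S)"
    "x \<in> carrier (deg0 R) \<Longrightarrow> fst h x \<in> carrier (deg0 S)"
    "x \<in> carrier (deg0 R) \<Longrightarrow> y \<in> carrier (deg0 R) \<Longrightarrow>
       fst h (x \<oplus>\<^bsub>deg0 R\<^esub> y) = fst h x \<oplus>\<^bsub>deg0 S\<^esub> fst h y"
    "x \<in> carrier (deg0 R) \<Longrightarrow> y \<in> carrier (deg0 R) \<Longrightarrow>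
       fst h (x \<otimes>\<^bsub>deg0 R\<^esub> y) = fst h x \<otimes>\<^bsub>deg0 S\<^esub> fst h y"
    "fst h \<zero>\<^bsub>deg0 R\<^esub> = \<zero>\<^bsub>deg0 S\<^esub>"
    "fst h \<one>\<^bsub>deg0 R\<^esub> = \<one>\<^bsub>deg0 S\<^esub>"
    "x \<in> carrier (deg0 R) \<Longrightarrow> fst h (\<ominus>\<^bsub>deg0 R\<^esub> x) = \<ominus>\<^bsub>deg0 S\<^esub> fst h x"
    "x \<in> carrier (deg0 R) \<Longrightarrow> y \<in> carrier (deg0 R) \<Longrightarrow>
       fst h (x \<ominus>\<^bsub>deg0 R\<^esub> y) = fst h x \<ominus>\<^bsub>deg0 S\<^esub> fst h y"
    "x \<notin> carrier (deg0 R) \<Longrightarrow> fst h x = undefined"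
    "p \<in> carrier (deg1 R) \<Longrightarrow> snd h p \<in> carrier (deg1 S)"
    "p \<in> carrier (deg1 R) \<Longrightarrow> q \<in> carrier (deg1 R) \<Longrightarrow>
       snd h (p \<oplus>\<^bsub>deg1 R\<^esub> q) = snd h p \<oplus>\<^bsub>deg1 S\<^esub> snd h q"
    "snd h \<zero>\<^bsub>deg1 R\<^esub> = \<zero>\<^bsub>deg1 S\<^esub>"
    "p \<in> carrier (deg1 R) \<Longrightarrow> snd h (\<ominus>\<^bsub>deg1 R\<^esub> p) = \<ominus>\<^bsub>deg1 S\<^esub> snd h p"
    "p \<in> carrier (deg1 R) \<Longrightarrow> q \<in> carrier (deg1 R) \<Longrightarrow>
       snd h (p \<ominus>\<^bsub>deg1 R\<^esub> q) = snd h p \<ominus>\<^bsub>deg1 S\<^esub> snd h q"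
    "p \<notin> carrier (deg1 R) \<Longrightarrow> snd h p = undefined"
    "r \<in> carrier (deg0 R) \<Longrightarrow> p \<in> carrier (deg1 R) \<Longrightarrow>
        snd h (r \<odot>\<^bsub>deg1 R\<^esub> p) = fst h r \<odot>\<^bsub>deg1 S\<^esub> snd h p"
    "p \<in> carrier (deg1 R) \<Longrightarrow> dd S (snd h p) = fst h (dd R p)"
proof -
  have rh: "fst h \<in> ring_hom (deg0 R) (deg0 S)" and e0: "fst h \<in> extensional (carrier (deg0 R))"
   and cl: "snd h \<in> carrier (deg1 R) \<rightarrow> carrier (deg1 S)"
   and e1: "snd h \<in> extensional (carrier (deg1 R))"
   and ad: "\<And>p q. p \<in> carrier (deg1 R) \<Longrightarrow> q \<in> carrier (deg1 R) \<Longrightarrow>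
       snd h (p \<oplus>\<^bsub>deg1 R\<^esub> q) = snd h p \<oplus>\<^bsub>deg1 S\<^esub> snd h q"
   and sm: "\<And>r p. r \<in> carrier (deg0 R) \<Longrightarrow> p \<in> carrier (deg1 R) \<Longrightarrow>
        snd h (r \<odot>\<^bsub>deg1 R\<^esub> p) = fst h r \<odot>\<^bsub>deg1 S\<^esub> snd h p"
   and dc: "\<And>p. p \<in> carrier (deg1 R) \<Longrightarrow> dd S (snd h p) = fst h (dd R p)"
    using h unfolding dg_hom_def by auto
  have rc: "ring_hom_cring (deg0 R) (deg0 S) (fst h)"
    by (rule ring_hom_cring.intro[OF dgringD(1)[OF R] dgringD(1)[OF S]]) (simp add: ring_hom_cring_axioms_def rh)
  show "fst h \<in> ring_hom (deg0 R) (deg0 S)" by (rule rh)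
  show "x \<in> carrier (deg0 R) \<Longrightarrow> fst h x \<in> carrier (deg0 S)"
    using ring_hom_closed[OF rh] by auto
  show "x \<in> carrier (deg0 R) \<Longrightarrow> y \<in> carrier (deg0 R) \<Longrightarrow>
       fst h (x \<oplus>\<^bsub>deg0 R\<^esub> y) = fst h x \<oplus>\<^bsub>deg0 S\<^esub> fst h y"
    using ring_hom_add[OF rh] by auto
  show "x \<in> carrier (deg0 R) \<Longrightarrow> y \<in> carrier (deg0 R) \<Longrightarrow>
       fst h (x \<otimes>\<^bsub>deg0 R\<^esub> y) = fst h x \<otimes>\<^bsub>deg0 S\<^esub> fst h y"
    using ring_hom_mult[OF rh] by auto
  show "fst h \<zero>\<^bsub>deg0 R\<^esub> = \<zero>\<^bsub>deg0 S\<^esub>" using ring_hom_zero[OF rh dgringD(5)[OF R] dgringD(5)[OF S]] by auto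
  show "fst h \<one>\<^bsub>deg0 R\<^esub> = \<one>\<^bsub>deg0 S\<^esub>" using ring_hom_one[OF rh] by auto
  show "x \<in> carrier (deg0 R) \<Longrightarrow> fst h (\<ominus>\<^bsub>deg0 R\<^esub> x) = \<ominus>\<^bsub>deg0 S\<^esub> fst h x"
    using ring_hom_cring.hom_a_inv[OF rc] by auto
  show "x \<in> carrier (deg0 R) \<Longrightarrow> y \<in> carrier (deg0 R) \<Longrightarrow>
       fst h (x \<ominus>\<^bsub>deg0 R\<^esub> y) = fst h x \<ominus>\<^bsub>deg0 S\<^esub> fst h y"
  proof -
    assume a: "x \<in> carrier (deg0 R)" "y \<in> carrier (deg0 R)"
    have "\<ominus>\<^bsub>deg0 R\<^esub> y \<in> carrier (deg0 R)"
      using a cring.cring_simprules(3)[OF dgringD(1)[OF R]] by blast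
    then show ?thesis using a ring_hom_cring.hom_a_inv[OF rc, of y] ring_hom_add[OF rh, of x "\<ominus>\<^bsub>deg0 R\<^esub> y"]
      by (simp add: a_minus_def)
  qed
  show "x \<notin> carrier (deg0 R) \<Longrightarrow> fst h x = undefined" using e0 by (simp add: extensional_def)
  show "p \<notin> carrier (deg1 R) \<Longrightarrow> snd h p = undefined" using e1 by (simp add: extensional_def)
  show "p \<in> carrier (deg1 R) \<Longrightarrow> snd h p \<in> carrier (deg1 S)" using cl by auto
  show "p \<in> carrier (deg1 R) \<Longrightarrow> q \<in> carrier (deg1 R) \<Longrightarrow>
       snd h (p \<oplus>\<^bsub>deg1 R\<^esub> q) = snd h p \<oplus>\<^bsub>deg1 S\<^esub> snd h q" by (rule ad)
  note ag = dgringD(3)[OF R] dgringD(3)[OF S]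
  show "snd h \<zero>\<^bsub>deg1 R\<^esub> = \<zero>\<^bsub>deg1 S\<^esub>" by (rule addhom(1)[OF ag cl ad])
  show "p \<in> carrier (deg1 R) \<Longrightarrow> snd h (\<ominus>\<^bsub>deg1 R\<^esub> p) = \<ominus>\<^bsub>deg1 S\<^esub> snd h p"
    by (rule addhom(2)[OF ag cl ad])
  show "p \<in> carrier (deg1 R) \<Longrightarrow> q \<in> carrier (deg1 R) \<Longrightarrow>
       snd h (p \<ominus>\<^bsub>deg1 R\<^esub> q) = snd h p \<ominus>\<^bsub>deg1 S\<^esub> snd h q"
    by (rule addhom(3)[OF ag cl ad])
  show "r \<in> carrier (deg0 R) \<Longrightarrow> p \<in> carrier (deg1 R) \<Longrightarrow>
        snd h (r \<odot>\<^bsub>deg1 R\<^esub> p) = fst h r \<odot>\<^bsub>deg1 S\<^esub> snd h p" by (rule sm)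
  show "p \<in> carrier (deg1 R) \<Longrightarrow> dd S (snd h p) = fst h (dd R p)" by (rule dc)
qed

lemma dim_subgroup:
  assumes R: "dgring R"
  shows "subgroup (dim R) (add_monoid (deg0 R))"
proof (rule subgroup.intro)
  note D = dgringD[OF R]
  interpret M: abelian_group "deg1 R" by (rule D(3))
  show "dim R \<subseteq> carrier (add_monoid (deg0 R))" using D(6) by (auto simp: dim_def)
  show "x \<otimes>\<^bsub>add_monoid (deg0 R)\<^esub> y \<in> dim R" if "x \<in> dim R" "y \<in> dim R" for x y
  proof -
    from that obtain w v where w: "w \<in> carrier (deg1 R)" "x = dd R w" "v \<in> carrier (deg1 R)" "y = dd R v"
      by (auto simp: dim_def)
    have "x \<otimes>\<^bsub>add_monoid (deg0 R)\<^esub> y = dd R (w \<oplus>\<^bsub>deg1 R\<^esub> v)" using D(7) w by simp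
    then show ?thesis using w M.a_closed by (auto simp: dim_def)
  qed
  show "\<one>\<^bsub>add_monoid (deg0 R)\<^esub> \<in> dim R" unfolding dim_def
    by (rule image_eqI[of _ _ "\<zero>\<^bsub>deg1 R\<^esub>"]) (use D(8) in auto)
  show "inv\<^bsub>add_monoid (deg0 R)\<^esub> x \<in> dim R" if "x \<in> dim R" for x
  proof -
    from that obtain w where w: "w \<in> carrier (deg1 R)" "x = dd R w" by (auto simp: dim_def)
    have "inv\<^bsub>add_monoid (deg0 R)\<^esub> x = \<ominus>\<^bsub>deg0 R\<^esub> x" by (simp add: a_inv_def)
    also have "\<dots> = dd R (\<ominus>\<^bsub>deg1 R\<^esub> w)" using D(9)[OF w(1)] w(2) by simp
    finally show ?thesis using w(1) M.a_inv_closed by (auto simp: dim_def)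
  qed
qed


lemma zero_in_dim:
  assumes R: "dgring R" shows "\<zero>\<^bsub>deg0 R\<^esub> \<in> dim R"
  using subgroup.one_closed[OF dim_subgroup[OF R]] by simp

lemma rcos_self:
  assumes R: "dgring R" and u: "u \<in> carrier (deg0 R)"
  shows "u \<in> dim R +>\<^bsub>deg0 R\<^esub> u"
proof -
  interpret M0: abelian_group "deg0 R" by (rule dgringD(4)[OF R])
  have sub: "dim R \<subseteq> carrier (deg0 R)" using dgringD(6)[OF R] by (auto simp: dim_def)
  show ?thesis using M0.a_rcosI[OF zero_in_dim[OF R] sub u] u by simp
qed

locale qi =
  fixes M :: "('m0,'m1) dgr" and R :: "('a0,'a1) dgr" and f :: "('m0,'m1,'a0,'a1) dgmap"
  assumes M: "dgring M" and R: "dgring R" and q: "quasi_iso M R f"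
begin

lemma h: "dg_hom M R f" using q by (simp add: quasi_iso_def)

lemmas DM = dgringD[OF M]
lemmas DR = dgringD[OF R]
lemmas Hf = dghomD[OF M R h]

lemma subM: "dim M \<subseteq> carrier (deg0 M)" using DM(6) by (auto simp: dim_def)
lemma subR: "dim R \<subseteq> carrier (deg0 R)" using DR(6) by (auto simp: dim_def)

lemma cok_zero:
  assumes u: "u \<in> carrier (deg0 M)" "fst f u = \<zero>\<^bsub>deg0 R\<^esub>"
  shows "coker_map M R f (dim M +>\<^bsub>deg0 M\<^esub> u) = dim R"
proof -
  interpret M0: abelian_group "deg0 M" by (rule DM(4))
  interpret R0: abelian_group "deg0 R" by (rule DR(4))
  define a0 where "a0 = (SOME a. a \<in> dim M +>\<^bsub>deg0 M\<^esub> u)"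
  have "a0 \<in> dim M +>\<^bsub>deg0 M\<^esub> u" unfolding a0_def using rcos_self[OF M u(1)] by (rule someI)
  then obtain w where w: "w \<in> carrier (deg1 M)" "a0 = dd M w \<oplus>\<^bsub>deg0 M\<^esub> u"
    by (auto simp: a_r_coset_def' dim_def)
  have "fst f a0 = fst f (dd M w) \<oplus>\<^bsub>deg0 R\<^esub> fst f u" using w Hf(3) DM(6) u by simp
  also have "\<dots> = dd R (snd f w)" using u w Hf(17) Hf(10) DR(6) Hf(2) DM(6) by simp
  finally have "fst f a0 \<in> dim R" using w Hf(10) by (simp add: dim_def)
  then show ?thesis unfolding coker_map_def a0_def[symmetric]
    using R0.a_coset_join2 subR dim_subgroup[OF R] by blast
qed

lemma kerf0:
  assumes u: "u \<in> carrier (deg0 M)" "fst f u = \<zero>\<^bsub>deg0 R\<^esub>"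
  shows "\<exists>z\<in>carrier (deg1 M). snd f z = \<zero>\<^bsub>deg1 R\<^esub> \<and> dd M z = u"
proof -
  interpret M0: abelian_group "deg0 M" by (rule DM(4))
  interpret R0: abelian_group "deg0 R" by (rule DR(4))
  interpret M1: abelian_group "deg1 M" by (rule DM(3))
  interpret R1: abelian_group "deg1 R" by (rule DR(3))
  have c1: "dim M +>\<^bsub>deg0 M\<^esub> u \<in> dcoker M" unfolding dcoker_def by (rule M0.a_rcosetsI[OF subM u(1)])
  have c2: "dim M +>\<^bsub>deg0 M\<^esub> \<zero>\<^bsub>deg0 M\<^esub> \<in> dcoker M" unfolding dcoker_def by (rule M0.a_rcosetsI[OF subM]) simp
  have "coker_map M R f (dim M +>\<^bsub>deg0 M\<^esub> u) = coker_map M R f (dim M +>\<^bsub>deg0 M\<^esub> \<zero>\<^bsub>deg0 M\<^esub>)"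
    using cok_zero[OF u] cok_zero[of "\<zero>\<^bsub>deg0 M\<^esub>"] Hf(5) by simp
  moreover have "inj_on (coker_map M R f) (dcoker M)" using q by (simp add: quasi_iso_def bij_betw_def)
  ultimately have "dim M +>\<^bsub>deg0 M\<^esub> u = dim M +>\<^bsub>deg0 M\<^esub> \<zero>\<^bsub>deg0 M\<^esub>" using c1 c2 by (simp add: inj_on_def)
  also have "\<dots> = dim M" using subM by simp
  finally have "u \<in> dim M" using M0.a_coset_join1 u(1) dim_subgroup[OF M] by blast
  then obtain w where w: "w \<in> carrier (deg1 M)" "u = dd M w" by (auto simp: dim_def)
  have "snd f w \<in> dker R" using w Hf(10) Hf(17) u by (simp add: dker_def)
  moreover have "snd f ` dker M = dker R" using q by (simp add: quasi_iso_def bij_betw_def)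
  ultimately obtain w' where w': "w' \<in> dker M" "snd f w' = snd f w" by (metis imageE)
  have w'c: "w' \<in> carrier (deg1 M)" "dd M w' = \<zero>\<^bsub>deg0 M\<^esub>" using w' by (auto simp: dker_def)
  show ?thesis
  proof (intro bexI conjI)
    show "w \<ominus>\<^bsub>deg1 M\<^esub> w' \<in> carrier (deg1 M)" using w w'c by simp
    show "snd f (w \<ominus>\<^bsub>deg1 M\<^esub> w') = \<zero>\<^bsub>deg1 R\<^esub>" using w w'c w' Hf(14) Hf(10)
      by (simp add: R1.r_neg a_minus_def)
    show "dd M (w \<ominus>\<^bsub>deg1 M\<^esub> w') = u" using w w'c DM(10) DM(6)
      by (simp add: a_minus_def)
  qed
qed

lemma kerf1:
  assumes z: "z \<in> carrier (deg1 M)" "dd M z = \<zero>\<^bsub>deg0 M\<^esub>" "snd f z = \<zero>\<^bsub>deg1 R\<^esub>"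
  shows "z = \<zero>\<^bsub>deg1 M\<^esub>"
proof -
  interpret M1: abelian_group "deg1 M" by (rule DM(3))
  have "inj_on (snd f) (dker M)" using q by (simp add: quasi_iso_def bij_betw_def)
  moreover have "z \<in> dker M" "\<zero>\<^bsub>deg1 M\<^esub> \<in> dker M" using z DM(8) by (auto simp: dker_def)
  ultimately show ?thesis using z(3) Hf(12) by (simp add: inj_on_def)
qed

lemma surjf0:
  assumes s1: "\<And>y. y \<in> carrier (deg1 R) \<Longrightarrow> \<exists>z\<in>carrier (deg1 M). snd f z = y"
    and a: "a \<in> carrier (deg0 R)"
  shows "\<exists>u\<in>carrier (deg0 M). fst f u = a"
proof -
  interpret M0: abelian_group "deg0 M" by (rule DM(4))
  interpret R0: abelian_group "deg0 R" by (rule DR(4))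
  have "dim R +>\<^bsub>deg0 R\<^esub> a \<in> dcoker R" unfolding dcoker_def by (rule R0.a_rcosetsI[OF subR a])
  moreover have "coker_map M R f ` dcoker M = dcoker R" using q by (simp add: quasi_iso_def bij_betw_def)
  ultimately obtain C where C: "C \<in> dcoker M" "coker_map M R f C = dim R +>\<^bsub>deg0 R\<^esub> a" by (metis imageE)
  then obtain u0 where u0: "u0 \<in> carrier (deg0 M)" "C = dim M +>\<^bsub>deg0 M\<^esub> u0"
    by (auto simp: dcoker_def A_RCOSETS_def')
  define a0 where "a0 = (SOME x. x \<in> C)"
  have "a0 \<in> C" unfolding a0_def using rcos_self[OF M u0(1)] u0(2) by (metis someI)
  then have a0c: "a0 \<in> carrier (deg0 M)" using M0.a_r_coset_subset_G[OF subM u0(1)] u0(2) by auto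
  have "a \<in> dim R +>\<^bsub>deg0 R\<^esub> fst f a0" using C(2) rcos_self[OF R a]
    unfolding coker_map_def a0_def by simp
  then obtain y where y: "y \<in> carrier (deg1 R)" "a = dd R y \<oplus>\<^bsub>deg0 R\<^esub> fst f a0"
    by (auto simp: a_r_coset_def' dim_def)
  obtain z where z: "z \<in> carrier (deg1 M)" "snd f z = y" using s1[OF y(1)] by blast
  show ?thesis
  proof (intro bexI)
    show "dd M z \<oplus>\<^bsub>deg0 M\<^esub> a0 \<in> carrier (deg0 M)" using z a0c DM(6) by simp
    have "fst f (dd M z) = dd R y" using Hf(17)[OF z(1)] z(2) by simp
    then show "fst f (dd M z \<oplus>\<^bsub>deg0 M\<^esub> a0) = a" using z a0c DM(6) Hf(3) y by simp
  qed
qed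

end


lemma ag_minus_zero:
  assumes "abelian_group G" "x \<in> carrier G" "y \<in> carrier G" "x \<ominus>\<^bsub>G\<^esub> y = \<zero>\<^bsub>G\<^esub>"
  shows "x = y"
proof -
  interpret G: abelian_group G by (rule assms(1))
  have "x = (x \<ominus>\<^bsub>G\<^esub> y) \<oplus>\<^bsub>G\<^esub> y" using assms(2,3)
    by (simp add: a_minus_def G.a_assoc G.l_neg)
  then show ?thesis using assms(3,4) by simp
qed

lemma ag_add_minus:
  assumes "abelian_group G" "a \<in> carrier G" "b \<in> carrier G"
  shows "a \<oplus>\<^bsub>G\<^esub> (b \<ominus>\<^bsub>G\<^esub> a) = b"
proof -
  interpret G: abelian_group G by (rule assms(1))
  show ?thesis using assms(2,3) G.r_neg2[of a b] by (simp add: a_minus_def G.a_comm)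
qed

lemma compose_eqD:
  assumes "compose S g f = F" "x \<in> S" shows "g (f x) = F x"
  using assms by (metis compose_eq)

lemma adm_surj1:
  assumes \<gamma>: "is_adm_corr R1 R2 \<gamma>" and R2: "dgring R2" and y: "y \<in> carrier (deg1 R1)"
  shows "\<exists>z\<in>carrier (deg1 (mid \<gamma>)). snd (lft \<gamma>) z = y"
proof -
  interpret R21: abelian_group "deg1 R2" by (rule dgringD(3)[OF R2])
  have "(y, \<zero>\<^bsub>deg1 R2\<^esub>) \<in> carrier (deg1 R1) \<times> carrier (deg1 R2)" using y by simp
  then have "(y, \<zero>\<^bsub>deg1 R2\<^esub>) \<in> (\<lambda>x. (snd (lft \<gamma>) x, snd (rgt \<gamma>) x)) ` carrier (deg1 (mid \<gamma>))"
    using \<gamma> by (simp add: is_adm_corr_def bij_betw_def)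
  then show ?thesis by force
qed

lemma adm_qi:
  assumes \<gamma>: "is_adm_corr R1 R2 \<gamma>" and R1: "dgring R1"
  shows "qi (mid \<gamma>) R1 (lft \<gamma>)"
  using assms by (simp add: qi_def is_adm_corr_def is_corr_def)

lemma corr_mor_bij:
  assumes R1: "dgring R1" and R2: "dgring R2"
    and \<beta>: "is_adm_corr R1 R2 \<beta>" and \<gamma>: "is_adm_corr R1 R2 \<gamma>"
    and h: "corr_mor R1 R2 \<beta> \<gamma> h"
  shows "bij_betw (snd h) (carrier (deg1 (mid \<beta>))) (carrier (deg1 (mid \<gamma>)))"
    "bij_betw (fst h) (carrier (deg0 (mid \<beta>))) (carrier (deg0 (mid \<gamma>)))"
proof -
  interpret B: qi "mid \<beta>" R1 "lft \<beta>" by (rule adm_qi[OF \<beta> R1])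
  interpret C: qi "mid \<gamma>" R1 "lft \<gamma>" by (rule adm_qi[OF \<gamma> R1])
  have Bd: "dgring (mid \<beta>)" and Cd: "dgring (mid \<gamma>)" by (rule B.M, rule C.M)
  have hh: "dg_hom (mid \<beta>) (mid \<gamma>) h" using h by (simp add: corr_mor_def)
  note H = dghomD[OF Bd Cd hh]
  have cl: "dg_comp (mid \<beta>) (lft \<gamma>) h = lft \<beta>" "dg_comp (mid \<beta>) (rgt \<gamma>) h = rgt \<beta>"
    using h by (auto simp: corr_mor_def)
  have f0: "\<And>x. x \<in> carrier (deg0 (mid \<beta>)) \<Longrightarrow> fst (lft \<gamma>) (fst h x) = fst (lft \<beta>) x"
    using compose_eqD[OF arg_cong[OF cl(1), of fst, unfolded dg_comp_def fst_conv]] by blast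
  have f1: "\<And>x. x \<in> carrier (deg1 (mid \<beta>)) \<Longrightarrow> snd (lft \<gamma>) (snd h x) = snd (lft \<beta>) x"
    using compose_eqD[OF arg_cong[OF cl(1), of snd, unfolded dg_comp_def snd_conv]] by blast
  have g1: "\<And>x. x \<in> carrier (deg1 (mid \<beta>)) \<Longrightarrow> snd (rgt \<gamma>) (snd h x) = snd (rgt \<beta>) x"
    using compose_eqD[OF arg_cong[OF cl(2), of snd, unfolded dg_comp_def snd_conv]] by blast
  have pb: "bij_betw (\<lambda>x. (snd (lft \<beta>) x, snd (rgt \<beta>) x))
       (carrier (deg1 (mid \<beta>))) (carrier (deg1 R1) \<times> carrier (deg1 R2))"
    using \<beta> by (simp add: is_adm_corr_def)
  have pc: "bij_betw (\<lambda>x. (snd (lft \<gamma>) x, snd (rgt \<gamma>) x))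
       (carrier (deg1 (mid \<gamma>))) (carrier (deg1 R1) \<times> carrier (deg1 R2))"
    using \<gamma> by (simp add: is_adm_corr_def)
  have inj1: "inj_on (snd h) (carrier (deg1 (mid \<beta>)))"
  proof (rule inj_onI)
    fix x y assume xy: "x \<in> carrier (deg1 (mid \<beta>))" "y \<in> carrier (deg1 (mid \<beta>))" "snd h x = snd h y"
    then have "(snd (lft \<beta>) x, snd (rgt \<beta>) x) = (snd (lft \<beta>) y, snd (rgt \<beta>) y)"
      using f1 g1 by metis
    then show "x = y" using pb xy(1,2) by (auto simp: bij_betw_def inj_on_def)
  qed
  have sur1: "snd h ` carrier (deg1 (mid \<beta>)) = carrier (deg1 (mid \<gamma>))"
  proof
    show "snd h ` carrier (deg1 (mid \<beta>)) \<subseteq> carrier (deg1 (mid \<gamma>))" using H(10) by auto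
    show "carrier (deg1 (mid \<gamma>)) \<subseteq> snd h ` carrier (deg1 (mid \<beta>))"
    proof
      fix y assume y: "y \<in> carrier (deg1 (mid \<gamma>))"
      have "(snd (lft \<gamma>) y, snd (rgt \<gamma>) y) \<in> carrier (deg1 R1) \<times> carrier (deg1 R2)"
        using pc y by (auto simp: bij_betw_def)
      then have "(snd (lft \<gamma>) y, snd (rgt \<gamma>) y) \<in> (\<lambda>x. (snd (lft \<beta>) x, snd (rgt \<beta>) x)) ` carrier (deg1 (mid \<beta>))"
        using pb by (simp add: bij_betw_def)
      then obtain x where x: "x \<in> carrier (deg1 (mid \<beta>))"
        "(snd (lft \<gamma>) y, snd (rgt \<gamma>) y) = (snd (lft \<beta>) x, snd (rgt \<beta>) x)"
        by (rule imageE) auto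
      then have "(snd (lft \<gamma>) (snd h x), snd (rgt \<gamma>) (snd h x)) = (snd (lft \<gamma>) y, snd (rgt \<gamma>) y)"
        using f1 g1 by simp
      then have "snd h x = y" using pc y H(10)[OF x(1)] by (auto simp: bij_betw_def inj_on_def)
      then show "y \<in> snd h ` carrier (deg1 (mid \<beta>))" using x(1) by auto
    qed
  qed
  show "bij_betw (snd h) (carrier (deg1 (mid \<beta>))) (carrier (deg1 (mid \<gamma>)))"
    using inj1 sur1 by (simp add: bij_betw_def)
  interpret B0: abelian_group "deg0 (mid \<beta>)" by (rule B.DM(4))
  interpret C0: abelian_group "deg0 (mid \<gamma>)" by (rule C.DM(4))
  interpret B1: abelian_group "deg1 (mid \<beta>)" by (rule B.DM(3))
  interpret C1: abelian_group "deg1 (mid \<gamma>)" by (rule C.DM(3))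
  interpret R10: abelian_group "deg0 R1" by (rule B.DR(4))
  have inj0: "inj_on (fst h) (carrier (deg0 (mid \<beta>)))"
  proof (rule inj_onI)
    fix x y assume xy: "x \<in> carrier (deg0 (mid \<beta>))" "y \<in> carrier (deg0 (mid \<beta>))" "fst h x = fst h y"
    define w where "w = x \<ominus>\<^bsub>deg0 (mid \<beta>)\<^esub> y"
    have wc: "w \<in> carrier (deg0 (mid \<beta>))" using xy unfolding w_def by simp
    have hw: "fst h w = \<zero>\<^bsub>deg0 (mid \<gamma>)\<^esub>" unfolding w_def using xy H(8) H(2) by (simp add: C0.r_neg a_minus_def)
    have "fst (lft \<beta>) w = \<zero>\<^bsub>deg0 R1\<^esub>" using f0[OF wc] hw C.Hf(5) by simp
    then obtain z where z: "z \<in> carrier (deg1 (mid \<beta>))" "snd (lft \<beta>) z = \<zero>\<^bsub>deg1 R1\<^esub>" "dd (mid \<beta>) z = w"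
      using B.kerf0[OF wc] by blast
    have "dd (mid \<gamma>) (snd h z) = \<zero>\<^bsub>deg0 (mid \<gamma>)\<^esub>" using H(17)[OF z(1)] z(3) hw by simp
    moreover have "snd (lft \<gamma>) (snd h z) = \<zero>\<^bsub>deg1 R1\<^esub>" using f1[OF z(1)] z(2) by simp
    ultimately have "snd h z = \<zero>\<^bsub>deg1 (mid \<gamma>)\<^esub>" using C.kerf1 H(10)[OF z(1)] by blast
    then have "snd h z = snd h \<zero>\<^bsub>deg1 (mid \<beta>)\<^esub>" using H(12) by simp
    then have "z = \<zero>\<^bsub>deg1 (mid \<beta>)\<^esub>" using inj1 z(1) by (simp add: inj_on_def)
    then have "w = \<zero>\<^bsub>deg0 (mid \<beta>)\<^esub>" using z(3) B.DM(8) by simp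
    then show "x = y" using ag_minus_zero[OF B.DM(4) xy(1,2)] unfolding w_def by simp
  qed
  have sur0: "fst h ` carrier (deg0 (mid \<beta>)) = carrier (deg0 (mid \<gamma>))"
  proof
    show "fst h ` carrier (deg0 (mid \<beta>)) \<subseteq> carrier (deg0 (mid \<gamma>))" using H(2) by auto
    show "carrier (deg0 (mid \<gamma>)) \<subseteq> fst h ` carrier (deg0 (mid \<beta>))"
    proof
      fix v assume v: "v \<in> carrier (deg0 (mid \<gamma>))"
      have a: "fst (lft \<gamma>) v \<in> carrier (deg0 R1)" using C.Hf(2)[OF v] .
      obtain u1 where u1: "u1 \<in> carrier (deg0 (mid \<beta>))" "fst (lft \<beta>) u1 = fst (lft \<gamma>) v"
        using B.surjf0[OF adm_surj1[OF \<beta> R2] a] by blast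
      define t where "t = v \<ominus>\<^bsub>deg0 (mid \<gamma>)\<^esub> fst h u1"
      have tc: "t \<in> carrier (deg0 (mid \<gamma>))" unfolding t_def using v H(2)[OF u1(1)] by simp
      have "fst (lft \<gamma>) t = \<zero>\<^bsub>deg0 R1\<^esub>" unfolding t_def
        using C.Hf(8)[OF v H(2)[OF u1(1)]] f0[OF u1(1)] u1(2) a by (simp add: R10.r_neg a_minus_def)
      then obtain z' where z': "z' \<in> carrier (deg1 (mid \<gamma>))" "dd (mid \<gamma>) z' = t"
        using C.kerf0[OF tc] by blast
      then obtain z'' where z'': "z'' \<in> carrier (deg1 (mid \<beta>))" "snd h z'' = z'" using sur1 z'(1) by (metis imageE)
      have "fst h (u1 \<oplus>\<^bsub>deg0 (mid \<beta>)\<^esub> dd (mid \<beta>) z'') = fst h u1 \<oplus>\<^bsub>deg0 (mid \<gamma>)\<^esub> t"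
        using H(3)[OF u1(1) B.DM(6)[OF z''(1)]] H(17)[OF z''(1)] z'' z' by simp
      also have "\<dots> = v" unfolding t_def by (rule ag_add_minus[OF C.DM(4) H(2)[OF u1(1)] v])
      finally show "v \<in> fst h ` carrier (deg0 (mid \<beta>))" using u1(1) B.DM(6)[OF z''(1)]
        by (metis B0.a_closed image_eqI)
    qed
  qed
  show "bij_betw (fst h) (carrier (deg0 (mid \<beta>))) (carrier (deg0 (mid \<gamma>)))"
    using inj0 sur0 by (simp add: bij_betw_def)
qed


lemma corr_mor_pt:
  assumes h: "corr_mor R1 R2 \<beta> \<gamma> h"
  shows "x \<in> carrier (deg0 (mid \<beta>)) \<Longrightarrow> fst (lft \<gamma>) (fst h x) = fst (lft \<beta>) x"
    "x \<in> carrier (deg0 (mid \<beta>)) \<Longrightarrow> fst (rgt \<gamma>) (fst h x) = fst (rgt \<beta>) x"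
    "p \<in> carrier (deg1 (mid \<beta>)) \<Longrightarrow> snd (lft \<gamma>) (snd h p) = snd (lft \<beta>) p"
    "p \<in> carrier (deg1 (mid \<beta>)) \<Longrightarrow> snd (rgt \<gamma>) (snd h p) = snd (rgt \<beta>) p"
proof -
  have cl: "dg_comp (mid \<beta>) (lft \<gamma>) h = lft \<beta>" "dg_comp (mid \<beta>) (rgt \<gamma>) h = rgt \<beta>"
    using h by (auto simp: corr_mor_def)
  show "x \<in> carrier (deg0 (mid \<beta>)) \<Longrightarrow> fst (lft \<gamma>) (fst h x) = fst (lft \<beta>) x"
    using compose_eqD[OF arg_cong[OF cl(1), of fst, unfolded dg_comp_def fst_conv]] by blast
  show "x \<in> carrier (deg0 (mid \<beta>)) \<Longrightarrow> fst (rgt \<gamma>) (fst h x) = fst (rgt \<beta>) x"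
    using compose_eqD[OF arg_cong[OF cl(2), of fst, unfolded dg_comp_def fst_conv]] by blast
  show "p \<in> carrier (deg1 (mid \<beta>)) \<Longrightarrow> snd (lft \<gamma>) (snd h p) = snd (lft \<beta>) p"
    using compose_eqD[OF arg_cong[OF cl(1), of snd, unfolded dg_comp_def snd_conv]] by blast
  show "p \<in> carrier (deg1 (mid \<beta>)) \<Longrightarrow> snd (rgt \<gamma>) (snd h p) = snd (rgt \<beta>) p"
    using compose_eqD[OF arg_cong[OF cl(2), of snd, unfolded dg_comp_def snd_conv]] by blast
qed

lemma compose_ext:
  assumes "\<And>x. x \<in> S \<Longrightarrow> g (f x) = F x" "F \<in> extensional S"
  shows "compose S g f = F"
  using assms by (auto simp: compose_def extensional_def fun_eq_iff)

lemma dg_hom_ext: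
  assumes "dg_hom R S h"
  shows "fst h \<in> extensional (carrier (deg0 R))" "snd h \<in> extensional (carrier (deg1 R))"
  using assms by (auto simp: dg_hom_def)

lemma dg_id_ext:
  "fst (dg_id R) \<in> extensional (carrier (deg0 R))" "snd (dg_id R) \<in> extensional (carrier (deg1 R))"
  "x \<in> carrier (deg0 R) \<Longrightarrow> fst (dg_id R) x = x" "p \<in> carrier (deg1 R) \<Longrightarrow> snd (dg_id R) p = p"
  by (auto simp: dg_id_def)

lemma corr_mor_iso:
  assumes R1: "dgring R1" and R2: "dgring R2"
    and \<beta>: "is_adm_corr R1 R2 \<beta>" and \<gamma>: "is_adm_corr R1 R2 \<gamma>"
    and h: "corr_mor R1 R2 \<beta> \<gamma> h"
  shows "corr_iso R1 R2 \<beta> \<gamma> h"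
proof -
  interpret B: qi "mid \<beta>" R1 "lft \<beta>" by (rule adm_qi[OF \<beta> R1])
  interpret C: qi "mid \<gamma>" R1 "lft \<gamma>" by (rule adm_qi[OF \<gamma> R1])
  have Bd: "dgring (mid \<beta>)" and Cd: "dgring (mid \<gamma>)" by (rule B.M, rule C.M)
  have hh: "dg_hom (mid \<beta>) (mid \<gamma>) h" using h by (simp add: corr_mor_def)
  note H = dghomD[OF Bd Cd hh]
  note P = corr_mor_pt[OF h]
  note bj = corr_mor_bij[OF R1 R2 \<beta> \<gamma> h]
  interpret B0: cring "deg0 (mid \<beta>)" by (rule B.DM(1))
  interpret BM: module "deg0 (mid \<beta>)" "deg1 (mid \<beta>)" by (rule B.DM(2))
  interpret C0: cring "deg0 (mid \<gamma>)" by (rule C.DM(1))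
  interpret C1: abelian_group "deg1 (mid \<gamma>)" by (rule C.DM(3))
  define k where "k = ((\<lambda>x\<in>carrier (deg0 (mid \<gamma>)). inv_into (carrier (deg0 (mid \<beta>))) (fst h) x),
                       (\<lambda>x\<in>carrier (deg1 (mid \<gamma>)). inv_into (carrier (deg1 (mid \<beta>))) (snd h) x))"
  have k0c: "\<And>x. x \<in> carrier (deg0 (mid \<gamma>)) \<Longrightarrow> fst k x \<in> carrier (deg0 (mid \<beta>))"
    using bij_betwE[OF bij_betw_inv_into[OF bj(2)]] by (simp add: k_def)
  have k0r: "\<And>x. x \<in> carrier (deg0 (mid \<gamma>)) \<Longrightarrow> fst h (fst k x) = x"
    using bij_betw_inv_into_right[OF bj(2)] by (simp add: k_def)
  have k0l: "\<And>x. x \<in> carrier (deg0 (mid \<beta>)) \<Longrightarrow> fst k (fst h x) = x"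
    using bij_betw_inv_into_left[OF bj(2)] H(2) by (simp add: k_def)
  have k1c: "\<And>x. x \<in> carrier (deg1 (mid \<gamma>)) \<Longrightarrow> snd k x \<in> carrier (deg1 (mid \<beta>))"
    using bij_betwE[OF bij_betw_inv_into[OF bj(1)]] by (simp add: k_def)
  have k1r: "\<And>x. x \<in> carrier (deg1 (mid \<gamma>)) \<Longrightarrow> snd h (snd k x) = x"
    using bij_betw_inv_into_right[OF bj(1)] by (simp add: k_def)
  have k1l: "\<And>x. x \<in> carrier (deg1 (mid \<beta>)) \<Longrightarrow> snd k (snd h x) = x"
    using bij_betw_inv_into_left[OF bj(1)] H(10) by (simp add: k_def)
  have i0: "\<And>x y. x \<in> carrier (deg0 (mid \<beta>)) \<Longrightarrow> y \<in> carrier (deg0 (mid \<beta>)) \<Longrightarrow> fst h x = fst h y \<Longrightarrow> x = y"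
    using bj(2) unfolding bij_betw_def inj_on_def by blast
  have i1: "\<And>x y. x \<in> carrier (deg1 (mid \<beta>)) \<Longrightarrow> y \<in> carrier (deg1 (mid \<beta>)) \<Longrightarrow> snd h x = snd h y \<Longrightarrow> x = y"
    using bj(1) unfolding bij_betw_def inj_on_def by blast
  have e: "fst k \<in> extensional (carrier (deg0 (mid \<gamma>)))" "snd k \<in> extensional (carrier (deg1 (mid \<gamma>)))"
    unfolding k_def by auto
  have kh: "dg_hom (mid \<gamma>) (mid \<beta>) k"
    unfolding dg_hom_def
  proof (intro conjI ballI)
    show "fst k \<in> ring_hom (deg0 (mid \<gamma>)) (deg0 (mid \<beta>))"
    proof (rule ring_hom_memI)
      show "fst k x \<in> carrier (deg0 (mid \<beta>))" if "x \<in> carrier (deg0 (mid \<gamma>))" for x using k0c that .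
      show "fst k (x \<otimes>\<^bsub>deg0 (mid \<gamma>)\<^esub> y) = fst k x \<otimes>\<^bsub>deg0 (mid \<beta>)\<^esub> fst k y"
        if "x \<in> carrier (deg0 (mid \<gamma>))" "y \<in> carrier (deg0 (mid \<gamma>))" for x y
      proof (rule i0)
        show "fst k (x \<otimes>\<^bsub>deg0 (mid \<gamma>)\<^esub> y) \<in> carrier (deg0 (mid \<beta>))" using k0c[OF C0.m_closed[OF that]] .
        show "fst k x \<otimes>\<^bsub>deg0 (mid \<beta>)\<^esub> fst k y \<in> carrier (deg0 (mid \<beta>))" using B0.m_closed[OF k0c[OF that(1)] k0c[OF that(2)]] .
        show "fst h (fst k (x \<otimes>\<^bsub>deg0 (mid \<gamma>)\<^esub> y)) = fst h (fst k x \<otimes>\<^bsub>deg0 (mid \<beta>)\<^esub> fst k y)"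
          unfolding k0r[OF C0.m_closed[OF that]] H(4)[OF k0c[OF that(1)] k0c[OF that(2)]] k0r[OF that(1)] k0r[OF that(2)] ..
      qed
      show "fst k (x \<oplus>\<^bsub>deg0 (mid \<gamma>)\<^esub> y) = fst k x \<oplus>\<^bsub>deg0 (mid \<beta>)\<^esub> fst k y"
        if "x \<in> carrier (deg0 (mid \<gamma>))" "y \<in> carrier (deg0 (mid \<gamma>))" for x y
      proof (rule i0)
        show "fst k (x \<oplus>\<^bsub>deg0 (mid \<gamma>)\<^esub> y) \<in> carrier (deg0 (mid \<beta>))" using k0c[OF C0.a_closed[OF that]] .
        show "fst k x \<oplus>\<^bsub>deg0 (mid \<beta>)\<^esub> fst k y \<in> carrier (deg0 (mid \<beta>))" using B0.a_closed[OF k0c[OF that(1)] k0c[OF that(2)]] .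
        show "fst h (fst k (x \<oplus>\<^bsub>deg0 (mid \<gamma>)\<^esub> y)) = fst h (fst k x \<oplus>\<^bsub>deg0 (mid \<beta>)\<^esub> fst k y)"
          unfolding k0r[OF C0.a_closed[OF that]] H(3)[OF k0c[OF that(1)] k0c[OF that(2)]] k0r[OF that(1)] k0r[OF that(2)] ..
      qed
      show "fst k \<one>\<^bsub>deg0 (mid \<gamma>)\<^esub> = \<one>\<^bsub>deg0 (mid \<beta>)\<^esub>"
        using k0l[of "\<one>\<^bsub>deg0 (mid \<beta>)\<^esub>"] H(6) by simp
    qed
    show "fst k \<in> extensional (carrier (deg0 (mid \<gamma>)))" by (rule e(1))
    show "snd k \<in> extensional (carrier (deg1 (mid \<gamma>)))" by (rule e(2))
    show "snd k \<in> carrier (deg1 (mid \<gamma>)) \<rightarrow> carrier (deg1 (mid \<beta>))" using k1c by auto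
    show "snd k (x \<oplus>\<^bsub>deg1 (mid \<gamma>)\<^esub> y) = snd k x \<oplus>\<^bsub>deg1 (mid \<beta>)\<^esub> snd k y"
      if "x \<in> carrier (deg1 (mid \<gamma>))" "y \<in> carrier (deg1 (mid \<gamma>))" for x y
    proof (rule i1)
      show "snd k (x \<oplus>\<^bsub>deg1 (mid \<gamma>)\<^esub> y) \<in> carrier (deg1 (mid \<beta>))" using k1c[OF C1.a_closed[OF that]] .
      show "snd k x \<oplus>\<^bsub>deg1 (mid \<beta>)\<^esub> snd k y \<in> carrier (deg1 (mid \<beta>))" using BM.a_closed[OF k1c[OF that(1)] k1c[OF that(2)]] .
      show "snd h (snd k (x \<oplus>\<^bsub>deg1 (mid \<gamma>)\<^esub> y)) = snd h (snd k x \<oplus>\<^bsub>deg1 (mid \<beta>)\<^esub> snd k y)"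
        unfolding k1r[OF C1.a_closed[OF that]] H(11)[OF k1c[OF that(1)] k1c[OF that(2)]] k1r[OF that(1)] k1r[OF that(2)] ..
    qed
    show "snd k (r \<odot>\<^bsub>deg1 (mid \<gamma>)\<^esub> x) = fst k r \<odot>\<^bsub>deg1 (mid \<beta>)\<^esub> snd k x"
      if "r \<in> carrier (deg0 (mid \<gamma>))" "x \<in> carrier (deg1 (mid \<gamma>))" for r x
    proof -
      have sc: "r \<odot>\<^bsub>deg1 (mid \<gamma>)\<^esub> x \<in> carrier (deg1 (mid \<gamma>))"
        using module.smult_closed[OF C.DM(2) that] .
      show ?thesis
    proof (rule i1)
      show "snd k (r \<odot>\<^bsub>deg1 (mid \<gamma>)\<^esub> x) \<in> carrier (deg1 (mid \<beta>))"
        using k1c[OF sc] .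
      show "fst k r \<odot>\<^bsub>deg1 (mid \<beta>)\<^esub> snd k x \<in> carrier (deg1 (mid \<beta>))"
        using BM.smult_closed[OF k0c[OF that(1)] k1c[OF that(2)]] .
      show "snd h (snd k (r \<odot>\<^bsub>deg1 (mid \<gamma>)\<^esub> x)) = snd h (fst k r \<odot>\<^bsub>deg1 (mid \<beta>)\<^esub> snd k x)"
      proof -
        have "snd h (fst k r \<odot>\<^bsub>deg1 (mid \<beta>)\<^esub> snd k x) = fst h (fst k r) \<odot>\<^bsub>deg1 (mid \<gamma>)\<^esub> snd h (snd k x)"
          by (rule H(16)[OF k0c[OF that(1)] k1c[OF that(2)]])
        also have "\<dots> = r \<odot>\<^bsub>deg1 (mid \<gamma>)\<^esub> x" using k0r[OF that(1)] k1r[OF that(2)] by simp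
        finally show ?thesis using k1r[OF sc] by simp
      qed
    qed
    qed
    show "dd (mid \<beta>) (snd k x) = fst k (dd (mid \<gamma>) x)" if "x \<in> carrier (deg1 (mid \<gamma>))" for x
    proof (rule i0)
      show "dd (mid \<beta>) (snd k x) \<in> carrier (deg0 (mid \<beta>))" using B.DM(6)[OF k1c[OF that]] .
      show "fst k (dd (mid \<gamma>) x) \<in> carrier (deg0 (mid \<beta>))" using k0c[OF C.DM(6)[OF that]] .
      show "fst h (dd (mid \<beta>) (snd k x)) = fst h (fst k (dd (mid \<gamma>) x))"
        using H(17)[OF k1c[OF that]] k1r[OF that] k0r C.DM(6)[OF that] by simp
    qed
  qed
  have cb: "is_corr R1 R2 \<beta>" and cc: "is_corr R1 R2 \<gamma>" using \<beta> \<gamma> by (auto simp: is_adm_corr_def)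
  have hb: "dg_hom (mid \<beta>) R1 (lft \<beta>)" "dg_hom (mid \<beta>) R2 (rgt \<beta>)"
   and hc: "dg_hom (mid \<gamma>) R1 (lft \<gamma>)" "dg_hom (mid \<gamma>) R2 (rgt \<gamma>)"
    using cb cc by (auto simp: is_corr_def)
  have km: "corr_mor R1 R2 \<gamma> \<beta> k"
    unfolding corr_mor_def
  proof (intro conjI cc cb kh)
    have "compose (carrier (deg0 (mid \<gamma>))) (fst (lft \<beta>)) (fst k) = fst (lft \<gamma>)"
    proof (rule compose_ext[OF _ dg_hom_ext(1)[OF hc(1)]])
      fix x assume x: "x \<in> carrier (deg0 (mid \<gamma>))"
      have "fst (lft \<gamma>) (fst h (fst k x)) = fst (lft \<beta>) (fst k x)" by (rule P(1)[OF k0c[OF x]])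
      then show "fst (lft \<beta>) (fst k x) = fst (lft \<gamma>) x" by (simp add: k0r[OF x])
    qed
    moreover have "compose (carrier (deg1 (mid \<gamma>))) (snd (lft \<beta>)) (snd k) = snd (lft \<gamma>)"
    proof (rule compose_ext[OF _ dg_hom_ext(2)[OF hc(1)]])
      fix x assume x: "x \<in> carrier (deg1 (mid \<gamma>))"
      have "snd (lft \<gamma>) (snd h (snd k x)) = snd (lft \<beta>) (snd k x)" by (rule P(3)[OF k1c[OF x]])
      then show "snd (lft \<beta>) (snd k x) = snd (lft \<gamma>) x" by (simp add: k1r[OF x])
    qed
    ultimately show "dg_comp (mid \<gamma>) (lft \<beta>) k = lft \<gamma>" by (simp add: dg_comp_def prod_eq_iff)
    have "compose (carrier (deg0 (mid \<gamma>))) (fst (rgt \<beta>)) (fst k) = fst (rgt \<gamma>)"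
    proof (rule compose_ext[OF _ dg_hom_ext(1)[OF hc(2)]])
      fix x assume x: "x \<in> carrier (deg0 (mid \<gamma>))"
      have "fst (rgt \<gamma>) (fst h (fst k x)) = fst (rgt \<beta>) (fst k x)" by (rule P(2)[OF k0c[OF x]])
      then show "fst (rgt \<beta>) (fst k x) = fst (rgt \<gamma>) x" by (simp add: k0r[OF x])
    qed
    moreover have "compose (carrier (deg1 (mid \<gamma>))) (snd (rgt \<beta>)) (snd k) = snd (rgt \<gamma>)"
    proof (rule compose_ext[OF _ dg_hom_ext(2)[OF hc(2)]])
      fix x assume x: "x \<in> carrier (deg1 (mid \<gamma>))"
      have "snd (rgt \<gamma>) (snd h (snd k x)) = snd (rgt \<beta>) (snd k x)" by (rule P(4)[OF k1c[OF x]])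
      then show "snd (rgt \<beta>) (snd k x) = snd (rgt \<gamma>) x" by (simp add: k1r[OF x])
    qed
    ultimately show "dg_comp (mid \<gamma>) (rgt \<beta>) k = rgt \<gamma>" by (simp add: dg_comp_def prod_eq_iff)
  qed
  have "compose (carrier (deg0 (mid \<beta>))) (fst k) (fst h) = fst (dg_id (mid \<beta>))"
    by (rule compose_ext[OF _ dg_id_ext(1)]) (simp add: k0l dg_id_ext(3))
  moreover have "compose (carrier (deg1 (mid \<beta>))) (snd k) (snd h) = snd (dg_id (mid \<beta>))"
    by (rule compose_ext[OF _ dg_id_ext(2)]) (simp add: k1l dg_id_ext(4))
  ultimately have c1: "dg_comp (mid \<beta>) k h = dg_id (mid \<beta>)" by (simp add: dg_comp_def prod_eq_iff)
  have "compose (carrier (deg0 (mid \<gamma>))) (fst h) (fst k) = fst (dg_id (mid \<gamma>))"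
    by (rule compose_ext[OF _ dg_id_ext(1)]) (simp add: k0r dg_id_ext(3))
  moreover have "compose (carrier (deg1 (mid \<gamma>))) (snd h) (snd k) = snd (dg_id (mid \<gamma>))"
    by (rule compose_ext[OF _ dg_id_ext(2)]) (simp add: k1r dg_id_ext(4))
  ultimately have c2: "dg_comp (mid \<gamma>) h k = dg_id (mid \<gamma>)" by (simp add: dg_comp_def prod_eq_iff)
  show ?thesis unfolding corr_iso_def using h km c1 c2 by blast
qed


lemma dg_id_hom:
  assumes R: "dgring R" shows "dg_hom R R (dg_id R)"
proof -
  interpret R0: cring "deg0 R" by (rule dgringD(1)[OF R])
  interpret RM: module "deg0 R" "deg1 R" by (rule dgringD(2)[OF R])
  show ?thesis unfolding dg_hom_def dg_id_def
    by (auto intro!: ring_hom_memI simp: dgringD(6)[OF R])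
qed

lemma dg_comp_hom:
  assumes T: "dgring T" and R: "dgring R" and S: "dgring S"
    and g: "dg_hom R S g" and h: "dg_hom T R h"
  shows "dg_hom T S (dg_comp T g h)"
proof -
  note G = dghomD[OF R S g] and H = dghomD[OF T R h]
  interpret T0: cring "deg0 T" by (rule dgringD(1)[OF T])
  interpret TM: module "deg0 T" "deg1 T" by (rule dgringD(2)[OF T])
  show ?thesis unfolding dg_hom_def dg_comp_def fst_conv snd_conv
  proof (intro conjI ballI)
    show "compose (carrier (deg0 T)) (fst g) (fst h) \<in> ring_hom (deg0 T) (deg0 S)"
      by (rule ring_hom_memI) (simp_all add: compose_eq G H)
    show "compose (carrier (deg0 T)) (fst g) (fst h) \<in> extensional (carrier (deg0 T))"
      by (simp add: compose_def)
    show "compose (carrier (deg1 T)) (snd g) (snd h) \<in> carrier (deg1 T) \<rightarrow> carrier (deg1 S)"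
      by (simp add: compose_eq G H)
    show "compose (carrier (deg1 T)) (snd g) (snd h) \<in> extensional (carrier (deg1 T))"
      by (simp add: compose_def)
    show "compose (carrier (deg1 T)) (snd g) (snd h) (x \<oplus>\<^bsub>deg1 T\<^esub> y) =
       compose (carrier (deg1 T)) (snd g) (snd h) x \<oplus>\<^bsub>deg1 S\<^esub> compose (carrier (deg1 T)) (snd g) (snd h) y"
      if "x \<in> carrier (deg1 T)" "y \<in> carrier (deg1 T)" for x y
      using that by (simp add: compose_eq G H)
    show "compose (carrier (deg1 T)) (snd g) (snd h) (r \<odot>\<^bsub>deg1 T\<^esub> x) =
       compose (carrier (deg0 T)) (fst g) (fst h) r \<odot>\<^bsub>deg1 S\<^esub> compose (carrier (deg1 T)) (snd g) (snd h) x"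
      if "r \<in> carrier (deg0 T)" "x \<in> carrier (deg1 T)" for r x
      using that by (simp add: compose_eq G H)
    show "dd S (compose (carrier (deg1 T)) (snd g) (snd h) x) = compose (carrier (deg0 T)) (fst g) (fst h) (dd T x)"
      if "x \<in> carrier (deg1 T)" for x
      using that by (simp add: compose_eq G H dgringD(6)[OF T])
  qed
qed


lemma lift_unique:
  assumes R1: "dgring R1" and \<alpha>: "is_adm_corr R1 R2 \<alpha>"
    and z: "z \<in> carrier (deg1 (mid \<alpha>))" "z' \<in> carrier (deg1 (mid \<alpha>))"
    and e: "snd (lft \<alpha>) z = snd (lft \<alpha>) z'" "dd (mid \<alpha>) z = dd (mid \<alpha>) z'"
  shows "z = z'"
proof -
  interpret A: qi "mid \<alpha>" R1 "lft \<alpha>" by (rule adm_qi[OF \<alpha> R1])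
  interpret A0: abelian_group "deg0 (mid \<alpha>)" by (rule A.DM(4))
  interpret A1: abelian_group "deg1 (mid \<alpha>)" by (rule A.DM(3))
  interpret R11: abelian_group "deg1 R1" by (rule A.DR(3))
  have c: "z \<ominus>\<^bsub>deg1 (mid \<alpha>)\<^esub> z' \<in> carrier (deg1 (mid \<alpha>))" using z by simp
  have "dd (mid \<alpha>) (z \<ominus>\<^bsub>deg1 (mid \<alpha>)\<^esub> z') = \<zero>\<^bsub>deg0 (mid \<alpha>)\<^esub>"
    using A.DM(10)[OF z] e(2) A.DM(6)[OF z(2)] by (simp add: a_minus_def A0.r_neg)
  moreover have "snd (lft \<alpha>) (z \<ominus>\<^bsub>deg1 (mid \<alpha>)\<^esub> z') = \<zero>\<^bsub>deg1 R1\<^esub>"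
    using A.Hf(14)[OF z] e(1) A.Hf(10)[OF z(2)] by (simp add: a_minus_def R11.r_neg)
  ultimately have "z \<ominus>\<^bsub>deg1 (mid \<alpha>)\<^esub> z' = \<zero>\<^bsub>deg1 (mid \<alpha>)\<^esub>" using A.kerf1[OF c] by blast
  then show ?thesis using ag_minus_zero[OF A.DM(3) z] by simp
qed

lemma lift_exists:
  assumes R1: "dgring R1" and R2: "dgring R2" and \<alpha>: "is_adm_corr R1 R2 \<alpha>"
    and sc: "\<And>a. a \<in> carrier (deg0 R1) \<Longrightarrow> \<sigma> a \<in> carrier (deg0 (mid \<alpha>))"
    and sr: "\<And>a. a \<in> carrier (deg0 R1) \<Longrightarrow> fst (lft \<alpha>) (\<sigma> a) = a"
    and p: "p \<in> carrier (deg1 R1)"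
  shows "\<exists>z\<in>carrier (deg1 (mid \<alpha>)). snd (lft \<alpha>) z = p \<and> dd (mid \<alpha>) z = \<sigma> (dd R1 p)"
proof -
  interpret A: qi "mid \<alpha>" R1 "lft \<alpha>" by (rule adm_qi[OF \<alpha> R1])
  interpret A0: abelian_group "deg0 (mid \<alpha>)" by (rule A.DM(4))
  interpret A1: abelian_group "deg1 (mid \<alpha>)" by (rule A.DM(3))
  interpret R10: abelian_group "deg0 R1" by (rule A.DR(4))
  interpret R11: abelian_group "deg1 R1" by (rule A.DR(3))
  obtain z0 where z0: "z0 \<in> carrier (deg1 (mid \<alpha>))" "snd (lft \<alpha>) z0 = p"
    using adm_surj1[OF \<alpha> R2 p] by blast
  have dp: "dd R1 p \<in> carrier (deg0 R1)" using A.DR(6)[OF p] .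
  define u where "u = \<sigma> (dd R1 p) \<ominus>\<^bsub>deg0 (mid \<alpha>)\<^esub> dd (mid \<alpha>) z0"
  have uc: "u \<in> carrier (deg0 (mid \<alpha>))" unfolding u_def using sc[OF dp] A.DM(6)[OF z0(1)] by simp
  have "fst (lft \<alpha>) u = dd R1 p \<ominus>\<^bsub>deg0 R1\<^esub> dd R1 p"
    unfolding u_def A.Hf(8)[OF sc[OF dp] A.DM(6)[OF z0(1)]] sr[OF dp] A.Hf(17)[OF z0(1), symmetric] z0(2) ..
  also have "\<dots> = \<zero>\<^bsub>deg0 R1\<^esub>" using dp by (simp add: a_minus_def R10.r_neg)
  finally obtain k where k: "k \<in> carrier (deg1 (mid \<alpha>))" "snd (lft \<alpha>) k = \<zero>\<^bsub>deg1 R1\<^esub>" "dd (mid \<alpha>) k = u"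
    using A.kerf0[OF uc] by blast
  show ?thesis
  proof (intro bexI conjI)
    show "z0 \<oplus>\<^bsub>deg1 (mid \<alpha>)\<^esub> k \<in> carrier (deg1 (mid \<alpha>))" using z0(1) k(1) by simp
    show "snd (lft \<alpha>) (z0 \<oplus>\<^bsub>deg1 (mid \<alpha>)\<^esub> k) = p" using A.Hf(11)[OF z0(1) k(1)] z0(2) k(2) p by simp
    show "dd (mid \<alpha>) (z0 \<oplus>\<^bsub>deg1 (mid \<alpha>)\<^esub> k) = \<sigma> (dd R1 p)"
      using A.DM(7)[OF z0(1) k(1)] k(3) ag_add_minus[OF A.DM(4) A.DM(6)[OF z0(1)] sc[OF dp]]
      unfolding u_def by simp
  qed
qed


lemma part3:
  assumes R1: "dgring R1" and R2: "dgring R2" and \<alpha>: "is_adm_corr R1 R2 \<alpha>"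
  shows "bij_betw fst
           {s. dg_hom R1 (mid \<alpha>) s \<and> dg_comp R1 (lft \<alpha>) s = dg_id R1}
           {\<sigma>. \<sigma> \<in> ring_hom (deg0 R1) (deg0 (mid \<alpha>)) \<and>
                \<sigma> \<in> extensional (carrier (deg0 R1)) \<and>
                compose (carrier (deg0 R1)) (fst (lft \<alpha>)) \<sigma> = (\<lambda>x\<in>carrier (deg0 R1). x)}"
proof -
  interpret A: qi "mid \<alpha>" R1 "lft \<alpha>" by (rule adm_qi[OF \<alpha> R1])
  interpret A0: cring "deg0 (mid \<alpha>)" by (rule A.DM(1))
  interpret AM: module "deg0 (mid \<alpha>)" "deg1 (mid \<alpha>)" by (rule A.DM(2))
  interpret R10: cring "deg0 R1" by (rule A.DR(1))
  interpret R1M: module "deg0 R1" "deg1 R1" by (rule A.DR(2))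
  have hf: "dg_hom (mid \<alpha>) R1 (lft \<alpha>)" by (rule A.h)
  let ?S = "{s. dg_hom R1 (mid \<alpha>) s \<and> dg_comp R1 (lft \<alpha>) s = dg_id R1}"
  let ?T = "{\<sigma>. \<sigma> \<in> ring_hom (deg0 R1) (deg0 (mid \<alpha>)) \<and>
                \<sigma> \<in> extensional (carrier (deg0 R1)) \<and>
                compose (carrier (deg0 R1)) (fst (lft \<alpha>)) \<sigma> = (\<lambda>x\<in>carrier (deg0 R1). x)}"
  have Sd: "\<And>s p. s \<in> ?S \<Longrightarrow> p \<in> carrier (deg1 R1) \<Longrightarrow> snd (lft \<alpha>) (snd s p) = p"
  proof -
    fix s p assume s: "s \<in> ?S" and p: "p \<in> carrier (deg1 R1)"
    have "dg_comp R1 (lft \<alpha>) s = dg_id R1" using s by simp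
    then have "snd (dg_comp R1 (lft \<alpha>) s) = snd (dg_id R1)" by simp
    then have "compose (carrier (deg1 R1)) (snd (lft \<alpha>)) (snd s) = snd (dg_id R1)"
      by (simp add: dg_comp_def)
    from compose_eqD[OF this p] show "snd (lft \<alpha>) (snd s p) = p" using dg_id_ext(4)[OF p] by simp
  qed
  have inj: "inj_on fst ?S"
  proof (rule inj_onI)
    fix s s' assume s: "s \<in> ?S" and s': "s' \<in> ?S" and e: "fst s = fst s'"
    have hs: "dg_hom R1 (mid \<alpha>) s" and hs': "dg_hom R1 (mid \<alpha>) s'" using s s' by auto
    note Hs = dghomD[OF R1 A.M hs] and Hs' = dghomD[OF R1 A.M hs']
    have "snd s = snd s'"
    proof
      fix p show "snd s p = snd s' p"
      proof (cases "p \<in> carrier (deg1 R1)")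
        case True
        show ?thesis
        proof (rule lift_unique[OF R1 \<alpha>])
          show "snd s p \<in> carrier (deg1 (mid \<alpha>))" "snd s' p \<in> carrier (deg1 (mid \<alpha>))"
            using Hs(10)[OF True] Hs'(10)[OF True] .
          show "snd (lft \<alpha>) (snd s p) = snd (lft \<alpha>) (snd s' p)" using Sd[OF s True] Sd[OF s' True] by simp
          show "dd (mid \<alpha>) (snd s p) = dd (mid \<alpha>) (snd s' p)" using Hs(17)[OF True] Hs'(17)[OF True] e by simp
        qed
      next
        case False
        then show ?thesis using Hs(15) Hs'(15) by simp
      qed
    qed
    then show "s = s'" using e by (simp add: prod_eq_iff)
  qed
  have img1: "fst ` ?S \<subseteq> ?T"
  proof
    fix \<sigma> assume "\<sigma> \<in> fst ` ?S"
    then obtain s where s: "s \<in> ?S" "\<sigma> = fst s" by blast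
    then have "dg_comp R1 (lft \<alpha>) s = dg_id R1" by simp
    then have "fst (dg_comp R1 (lft \<alpha>) s) = fst (dg_id R1)" by simp
    then have "compose (carrier (deg0 R1)) (fst (lft \<alpha>)) (fst s) = fst (dg_id R1)"
      by (simp add: dg_comp_def)
    moreover have "fst s \<in> ring_hom (deg0 R1) (deg0 (mid \<alpha>))" "fst s \<in> extensional (carrier (deg0 R1))"
      using s(1) by (simp_all add: dg_hom_def)
    moreover have "fst (dg_id R1) = (\<lambda>x\<in>carrier (deg0 R1). x)" by (simp add: dg_id_def)
    ultimately show "\<sigma> \<in> ?T" using s(2) by simp
  qed
  have img2: "?T \<subseteq> fst ` ?S"
  proof
    fix \<sigma> assume \<sigma>: "\<sigma> \<in> ?T"
    have rh: "\<sigma> \<in> ring_hom (deg0 R1) (deg0 (mid \<alpha>))" using \<sigma> by simp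
    have sc: "\<And>a. a \<in> carrier (deg0 R1) \<Longrightarrow> \<sigma> a \<in> carrier (deg0 (mid \<alpha>))"
      using ring_hom_closed[OF rh] .
    have sr: "\<And>a. a \<in> carrier (deg0 R1) \<Longrightarrow> fst (lft \<alpha>) (\<sigma> a) = a"
    proof -
      fix a assume a: "a \<in> carrier (deg0 R1)"
      have "compose (carrier (deg0 R1)) (fst (lft \<alpha>)) \<sigma> = (\<lambda>x\<in>carrier (deg0 R1). x)" using \<sigma> by simp
      from compose_eqD[OF this a] a show "fst (lft \<alpha>) (\<sigma> a) = a" by simp
    qed
    define P where "P = (\<lambda>p z. z \<in> carrier (deg1 (mid \<alpha>)) \<and> snd (lft \<alpha>) z = p \<and> dd (mid \<alpha>) z = \<sigma> (dd R1 p))"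
    have ex1: "\<exists>!z. P p z" if p: "p \<in> carrier (deg1 R1)" for p
    proof -
      obtain z where "z \<in> carrier (deg1 (mid \<alpha>))" "snd (lft \<alpha>) z = p" "dd (mid \<alpha>) z = \<sigma> (dd R1 p)"
        using lift_exists[OF R1 R2 \<alpha> sc sr p] by blast
      then have "P p z" by (simp add: P_def)
      moreover have "z' = z" if "P p z'" "P p z" for z' z
        using that lift_unique[OF R1 \<alpha>, of z' z] by (simp add: P_def)
      ultimately show ?thesis by blast
    qed
    define s1 where "s1 = (\<lambda>p\<in>carrier (deg1 R1). THE z. P p z)"
    have s1P: "P p (s1 p)" if "p \<in> carrier (deg1 R1)" for p
      using theI'[OF ex1[OF that]] that by (simp add: s1_def)
    have s1c: "s1 p \<in> carrier (deg1 (mid \<alpha>))" "snd (lft \<alpha>) (s1 p) = p"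
      "dd (mid \<alpha>) (s1 p) = \<sigma> (dd R1 p)" if "p \<in> carrier (deg1 R1)" for p
      using s1P[OF that] by (auto simp: P_def)
    have uq: "\<And>p z. p \<in> carrier (deg1 R1) \<Longrightarrow> P p z \<Longrightarrow> s1 p = z"
      using ex1 s1P by blast
    have hs: "dg_hom R1 (mid \<alpha>) (\<sigma>, s1)"
      unfolding dg_hom_def fst_conv snd_conv
    proof (intro conjI ballI)
      show "\<sigma> \<in> ring_hom (deg0 R1) (deg0 (mid \<alpha>))" by (rule rh)
      show "\<sigma> \<in> extensional (carrier (deg0 R1))" using \<sigma> by simp
      show "s1 \<in> carrier (deg1 R1) \<rightarrow> carrier (deg1 (mid \<alpha>))" using s1c(1) by auto
      show "s1 \<in> extensional (carrier (deg1 R1))" by (simp add: s1_def)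
      show "s1 (x \<oplus>\<^bsub>deg1 R1\<^esub> y) = s1 x \<oplus>\<^bsub>deg1 (mid \<alpha>)\<^esub> s1 y"
        if "x \<in> carrier (deg1 R1)" "y \<in> carrier (deg1 R1)" for x y
      proof (rule uq)
        show "x \<oplus>\<^bsub>deg1 R1\<^esub> y \<in> carrier (deg1 R1)" using that by simp
        have c: "s1 x \<oplus>\<^bsub>deg1 (mid \<alpha>)\<^esub> s1 y \<in> carrier (deg1 (mid \<alpha>))"
          using AM.a_closed[OF s1c(1)[OF that(1)] s1c(1)[OF that(2)]] .
        have f: "snd (lft \<alpha>) (s1 x \<oplus>\<^bsub>deg1 (mid \<alpha>)\<^esub> s1 y) = x \<oplus>\<^bsub>deg1 R1\<^esub> y"
          by (simp only: A.Hf(11)[OF s1c(1)[OF that(1)] s1c(1)[OF that(2)]] s1c(2)[OF that(1)] s1c(2)[OF that(2)])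
        have d: "dd (mid \<alpha>) (s1 x \<oplus>\<^bsub>deg1 (mid \<alpha>)\<^esub> s1 y) = \<sigma> (dd R1 (x \<oplus>\<^bsub>deg1 R1\<^esub> y))"
          by (simp only: A.DM(7)[OF s1c(1)[OF that(1)] s1c(1)[OF that(2)]] s1c(3)[OF that(1)] s1c(3)[OF that(2)]
               A.DR(7)[OF that] ring_hom_add[OF rh A.DR(6)[OF that(1)] A.DR(6)[OF that(2)]])
        show "P (x \<oplus>\<^bsub>deg1 R1\<^esub> y) (s1 x \<oplus>\<^bsub>deg1 (mid \<alpha>)\<^esub> s1 y)"
          unfolding P_def by (intro conjI c f d)
      qed
      show "s1 (r \<odot>\<^bsub>deg1 R1\<^esub> x) = \<sigma> r \<odot>\<^bsub>deg1 (mid \<alpha>)\<^esub> s1 x"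
        if "r \<in> carrier (deg0 R1)" "x \<in> carrier (deg1 R1)" for r x
      proof (rule uq)
        show "r \<odot>\<^bsub>deg1 R1\<^esub> x \<in> carrier (deg1 R1)" using that by simp
        have c: "\<sigma> r \<odot>\<^bsub>deg1 (mid \<alpha>)\<^esub> s1 x \<in> carrier (deg1 (mid \<alpha>))"
          using AM.smult_closed[OF sc[OF that(1)] s1c(1)[OF that(2)]] .
        have f: "snd (lft \<alpha>) (\<sigma> r \<odot>\<^bsub>deg1 (mid \<alpha>)\<^esub> s1 x) = r \<odot>\<^bsub>deg1 R1\<^esub> x"
          by (simp only: A.Hf(16)[OF sc[OF that(1)] s1c(1)[OF that(2)]] sr[OF that(1)] s1c(2)[OF that(2)])
        have d: "dd (mid \<alpha>) (\<sigma> r \<odot>\<^bsub>deg1 (mid \<alpha>)\<^esub> s1 x) = \<sigma> (dd R1 (r \<odot>\<^bsub>deg1 R1\<^esub> x))"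
          by (simp only: A.DM(11)[OF sc[OF that(1)] s1c(1)[OF that(2)]] s1c(3)[OF that(2)]
               A.DR(11)[OF that] ring_hom_mult[OF rh that(1) A.DR(6)[OF that(2)]])
        show "P (r \<odot>\<^bsub>deg1 R1\<^esub> x) (\<sigma> r \<odot>\<^bsub>deg1 (mid \<alpha>)\<^esub> s1 x)"
          unfolding P_def by (intro conjI c f d)
      qed
      show "dd (mid \<alpha>) (s1 x) = \<sigma> (dd R1 x)" if "x \<in> carrier (deg1 R1)" for x
        using s1c(3)[OF that] .
    qed
    have "compose (carrier (deg1 R1)) (snd (lft \<alpha>)) s1 = snd (dg_id R1)"
    proof (rule compose_ext[OF _ dg_id_ext(2)])
      fix p assume p: "p \<in> carrier (deg1 R1)"
      show "snd (lft \<alpha>) (s1 p) = snd (dg_id R1) p" unfolding s1c(2)[OF p] dg_id_ext(4)[OF p] ..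
    qed
    moreover have "compose (carrier (deg0 R1)) (fst (lft \<alpha>)) \<sigma> = fst (dg_id R1)"
      using \<sigma> by (simp add: dg_id_def)
    ultimately have "dg_comp R1 (lft \<alpha>) (\<sigma>, s1) = dg_id R1" by (simp add: dg_comp_def prod_eq_iff)
    with hs have "(\<sigma>, s1) \<in> ?S" by simp
    then show "\<sigma> \<in> fst ` ?S" by (rule image_eqI[rotated]) simp
  qed
  show ?thesis unfolding bij_betw_def using inj img1 img2 by blast
qed

theorem lemma4p3p6:
  fixes R1 :: "('a0, 'a1) dgr" and R2 :: "('b0, 'b1) dgr"
    and \<alpha> :: "('m0, 'm1, 'a0, 'a1, 'b0, 'b1) corr"
    and A :: "('a0, 'a1, 'b0, 'b1) dgmap \<Rightarrow> ('n0, 'n1, 'a0, 'a1, 'b0, 'b1) corr"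
    and \<eta> :: "('a0, 'a1, 'b0, 'b1) dgmap \<Rightarrow> ('a0, 'a1, 'n0, 'n1) dgmap"
  assumes R1: "dgring R1" and R2: "dgring R2"
    and \<alpha>: "is_adm_corr R1 R2 \<alpha>"
    and adm: "\<And>\<phi>. dg_hom R1 R2 \<phi> \<Longrightarrow>
        is_admissibilization R1 R2 (graph_corr R1 \<phi>) (A \<phi>) (\<eta> \<phi>)
          TYPE(('m0, 'm1, 'a0, 'a1, 'b0, 'b1) corr)"
  shows "bij_betw (\<lambda>(\<phi>, \<iota>). dg_comp R1 \<iota> (\<eta> \<phi>))
           {(\<phi>, \<iota>). dg_hom R1 R2 \<phi> \<and> corr_iso R1 R2 (A \<phi>) \<alpha> \<iota>}
           {s. dg_hom R1 (mid \<alpha>) s \<and> dg_comp R1 (lft \<alpha>) s = dg_id R1}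
       \<and> (\<forall>(\<phi>, \<iota>) \<in> {(\<phi>, \<iota>). dg_hom R1 R2 \<phi> \<and> corr_iso R1 R2 (A \<phi>) \<alpha> \<iota>}.
            \<phi> = dg_comp R1 (rgt \<alpha>) (dg_comp R1 \<iota> (\<eta> \<phi>)))
       \<and> bij_betw fst
           {s. dg_hom R1 (mid \<alpha>) s \<and> dg_comp R1 (lft \<alpha>) s = dg_id R1}
           {\<sigma>. \<sigma> \<in> ring_hom (deg0 R1) (deg0 (mid \<alpha>)) \<and>
                \<sigma> \<in> extensional (carrier (deg0 R1)) \<and>
                compose (carrier (deg0 R1)) (fst (lft \<alpha>)) \<sigma> = (\<lambda>x\<in>carrier (deg0 R1). x)}"
proof -
  have Md: "dgring (mid \<alpha>)" and fh: "dg_hom (mid \<alpha>) R1 (lft \<alpha>)" and gh: "dg_hom (mid \<alpha>) R2 (rgt \<alpha>)"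
    and ca: "is_corr R1 R2 \<alpha>"
    using \<alpha> by (auto simp: is_adm_corr_def is_corr_def)
  have U: "bij_betw (\<lambda>\<iota>. dg_comp R1 \<iota> (\<eta> \<phi>)) {\<iota>. corr_mor R1 R2 (A \<phi>) \<alpha> \<iota>}
              {h. corr_mor R1 R2 (graph_corr R1 \<phi>) \<alpha> h}" if "dg_hom R1 R2 \<phi>" for \<phi>
  proof -
    have "adm_universal_at R1 R2 (graph_corr R1 \<phi>) (A \<phi>) (\<eta> \<phi>) \<alpha>"
      using adm[OF that] unfolding is_admissibilization_def by blast
    then show ?thesis using \<alpha> unfolding adm_universal_at_def by (simp add: graph_corr_def)
  qed
  have Aadm: "is_adm_corr R1 R2 (A \<phi>)" if "dg_hom R1 R2 \<phi>" for \<phi>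
    using adm[OF that] unfolding is_admissibilization_def by blast
  have gm: "dg_hom R1 (mid \<alpha>) h \<and> dg_comp R1 (lft \<alpha>) h = dg_id R1 \<and> dg_comp R1 (rgt \<alpha>) h = \<phi>"
    if "corr_mor R1 R2 (graph_corr R1 \<phi>) \<alpha> h" for \<phi> h
    using that by (simp add: corr_mor_def graph_corr_def)
  have inX: "corr_mor R1 R2 (graph_corr R1 \<phi>) \<alpha> (dg_comp R1 \<iota> (\<eta> \<phi>))"
    if "dg_hom R1 R2 \<phi>" "corr_iso R1 R2 (A \<phi>) \<alpha> \<iota>" for \<phi> \<iota>
  proof -
    have "\<iota> \<in> {\<iota>. corr_mor R1 R2 (A \<phi>) \<alpha> \<iota>}" using that(2) by (simp add: corr_iso_def)
    from bij_betwE[OF U[OF that(1)]] this show ?thesis by blast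
  qed
  let ?X = "{(\<phi>, \<iota>). dg_hom R1 R2 \<phi> \<and> corr_iso R1 R2 (A \<phi>) \<alpha> \<iota>}"
  let ?S = "{s. dg_hom R1 (mid \<alpha>) s \<and> dg_comp R1 (lft \<alpha>) s = dg_id R1}"
  let ?F = "\<lambda>(\<phi>, \<iota>). dg_comp R1 \<iota> (\<eta> \<phi>)"
  have c2: "\<forall>(\<phi>, \<iota>) \<in> ?X. \<phi> = dg_comp R1 (rgt \<alpha>) (dg_comp R1 \<iota> (\<eta> \<phi>))"
  proof
    fix x assume x: "x \<in> ?X"
    obtain \<phi> \<iota> where xe: "x = (\<phi>, \<iota>)" by (cases x)
    have h: "dg_hom R1 R2 \<phi>" "corr_iso R1 R2 (A \<phi>) \<alpha> \<iota>" using x xe by simp_all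
    have "\<phi> = dg_comp R1 (rgt \<alpha>) (dg_comp R1 \<iota> (\<eta> \<phi>))" using gm[OF inX[OF h]] by simp
    then show "case x of (\<phi>, \<iota>) \<Rightarrow> \<phi> = dg_comp R1 (rgt \<alpha>) (dg_comp R1 \<iota> (\<eta> \<phi>))" using xe by simp
  qed
  have inj: "inj_on ?F ?X"
  proof (rule inj_onI)
    fix x y assume x: "x \<in> ?X" and y: "y \<in> ?X" and e: "?F x = ?F y"
    obtain \<phi> \<iota> where xe: "x = (\<phi>, \<iota>)" by (cases x)
    obtain \<phi>' \<iota>' where ye: "y = (\<phi>', \<iota>')" by (cases y)
    have x': "dg_hom R1 R2 \<phi>" "corr_iso R1 R2 (A \<phi>) \<alpha> \<iota>" using x xe by auto
    have y': "dg_hom R1 R2 \<phi>'" "corr_iso R1 R2 (A \<phi>') \<alpha> \<iota>'" using y ye by auto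
    have e': "dg_comp R1 \<iota> (\<eta> \<phi>) = dg_comp R1 \<iota>' (\<eta> \<phi>')" using e xe ye by simp
    have "\<phi> = \<phi>'" using gm[OF inX[OF x']] gm[OF inX[OF y']] e' by simp
    moreover have "\<iota> = \<iota>'"
    proof -
      have "\<iota> \<in> {\<iota>. corr_mor R1 R2 (A \<phi>) \<alpha> \<iota>}" "\<iota>' \<in> {\<iota>. corr_mor R1 R2 (A \<phi>) \<alpha> \<iota>}"
        using x'(2) y'(2) \<open>\<phi> = \<phi>'\<close> by (simp_all add: corr_iso_def)
      then show ?thesis using U[OF x'(1)] e' \<open>\<phi> = \<phi>'\<close> unfolding bij_betw_def inj_on_def by blast
    qed
    ultimately show "x = y" using xe ye by simp
  qed
  have img1: "?F ` ?X \<subseteq> ?S"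
  proof
    fix s assume "s \<in> ?F ` ?X"
    then obtain \<phi> \<iota> where "dg_hom R1 R2 \<phi>" "corr_iso R1 R2 (A \<phi>) \<alpha> \<iota>" "s = dg_comp R1 \<iota> (\<eta> \<phi>)" by auto
    then show "s \<in> ?S" using gm[OF inX] by blast
  qed
  have img2: "?S \<subseteq> ?F ` ?X"
  proof
    fix s assume s: "s \<in> ?S"
    have sh: "dg_hom R1 (mid \<alpha>) s" and sl: "dg_comp R1 (lft \<alpha>) s = dg_id R1" using s by auto
    define \<phi> where "\<phi> = dg_comp R1 (rgt \<alpha>) s"
    have ph: "dg_hom R1 R2 \<phi>" unfolding \<phi>_def by (rule dg_comp_hom[OF R1 Md R2 gh sh])
    have "corr_mor R1 R2 (graph_corr R1 \<phi>) \<alpha> s"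
      unfolding corr_mor_def is_corr_def graph_corr_def
      using R1 dg_id_hom[OF R1] ph Md fh gh sh sl by (simp add: \<phi>_def)
    then have "s \<in> (\<lambda>\<iota>. dg_comp R1 \<iota> (\<eta> \<phi>)) ` {\<iota>. corr_mor R1 R2 (A \<phi>) \<alpha> \<iota>}"
      using U[OF ph] by (simp add: bij_betw_def)
    then obtain \<iota> where \<iota>: "corr_mor R1 R2 (A \<phi>) \<alpha> \<iota>" "s = dg_comp R1 \<iota> (\<eta> \<phi>)" by blast
    have "corr_iso R1 R2 (A \<phi>) \<alpha> \<iota>" by (rule corr_mor_iso[OF R1 R2 Aadm[OF ph] \<alpha> \<iota>(1)])
    then have "(\<phi>, \<iota>) \<in> ?X" using ph by simp
    moreover have "s = ?F (\<phi>, \<iota>)" using \<iota>(2) by simp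
    ultimately show "s \<in> ?F ` ?X" by (rule rev_image_eqI)
  qed
  have b1: "bij_betw ?F ?X ?S" unfolding bij_betw_def using inj img1 img2 by blast
  show ?thesis using b1 c2 part3[OF R1 R2 \<alpha>] by blast
qed

end
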